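(* Let $m<N$ and let $A\in\mathbb{R}^{m\times N}$ have full row rank and rows $a_1,\dots,a_m$ of unit Euclidean norm. Let $X$ be an $\mathbb{R}^N$-valued random vector with $\mathbb{E}\|X\|^2<\infty$, let $W$ be an $\mathbb{R}^m$-valued random vector with $\mathbb{E}W=0$ and $\mathbb{E}\|W\|^2<\infty$, and let $Z$ be a random variable with values in $[m]=\{1,\dots,m\}$ with $\Pr\{Z=i\}=\lambda_i>0$ for all $i\in[m]$. Let $\{X_k\}_{k\ge1},\{W_k\}_{k\ge1},\{Z_k\}_{k\ge1}$ be IID copies of $X,W,Z$ respectively, with the three sequences jointly independent, and set $Y_k:=AX_k+W_k$, $\mathcal{Y}_k:=Y_k(Z_k)$ (the $Z_k$-th component of $Y_k$), and $Y:=AX+W$. Let $\{\eta_k\}_{k\ge0}$ be positive step sizes with $\sum_k\eta_k=\infty$ and $\sum_k\eta_k^2<\infty$. Fix $x_0\in\mathbb{R}^N$ and define $\alpha_0=0\in\mathbb{R}^m$ and $$\alpha_{k+1}=\alpha_k+\eta_k\big[\tilde Y_{k+1}-e_{Z_{k+1}}A(x_0+A'\alpha_k)\big],\quad k\ge0,$$ where $e_{j}$ denotes the $m\times m$ matrix with $1$ in its $(j,j)$ entry and zeros elsewhere, and $\tilde Y_{k+1}\in\mathbb{R}^m$ is the vector whose $Z_{k+1}$-th entry is $\mathcal{Y}_{k+1}$ and whose other entries are $0$. Then, almost surely, $$\alpha_k\to\alpha^*:=(AA')^{-1}(\mathbb{E}Y-Ax_0)\quad\text{as }k\to\infty.$$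
   Context: $A'$ denotes the transpose of $A$; $\|\cdot\|$ is the Euclidean norm. Equivalently, the iterates $x_k:=x_0+A'\alpha_k$ satisfy the stochastic Kaczmarz recursion $x_{k+1}=x_k+\eta_k[\mathcal{Y}_{k+1}-\langle a_{Z_{k+1}},x_k\rangle]a_{Z_{k+1}}$. *)

theory Defs
  imports "HOL-Probability.Probability"
begin

text \<open>Indices of the random variables X_k, W_k, Z_k (k >= 1) used to express
  the joint independence of the three IID sequences.\<close>
datatype kidx = IX nat | IW nat | IZ nat

definition kacz_events ::
  "'w measure \<Rightarrow> (nat \<Rightarrow> 'w \<Rightarrow> real^'n) \<Rightarrow> (nat \<Rightarrow> 'w \<Rightarrow> real^'m) \<Rightarrow> (nat \<Rightarrow> 'w \<Rightarrow> 'm)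
    \<Rightarrow> kidx \<Rightarrow> 'w set set" where
  "kacz_events M Xs Ws Zs i = (case i of
      IX k \<Rightarrow> {Xs k -` B \<inter> space M | B. B \<in> sets borel}
    | IW k \<Rightarrow> {Ws k -` B \<inter> space M | B. B \<in> sets borel}
    | IZ k \<Rightarrow> {Zs k -` B \<inter> space M | B. B \<in> sets (count_space UNIV)})"

definition unit_diag :: "'m \<Rightarrow> real^'m^'m" where
  "unit_diag j = (\<chi> i l. if i = j \<and> l = j then 1 else 0)"

end

theory Submission
  imports Defs "HOL-Probability.Probability"
begin


lemma meas_transfer:
  assumes "f \<in> borel_measurable Fa" "space Fa = space Fb" "sets Fa \<subseteq> sets Fb"
  shows "f \<in> borel_measurable Fb"
  using assms unfolding measurable_def by auto

lemma sq_add_le: "((a::real) + b)\<^sup>2 \<le> 2 * a\<^sup>2 + 2 * b\<^sup>2"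
proof -
  have "0 \<le> (a - b)\<^sup>2" by simp
  then show ?thesis by (simp add: power2_eq_square algebra_simps)
qed

lemma abs_mult_le_sq: "\<bar>(a::real) * b\<bar> \<le> a\<^sup>2 + b\<^sup>2"
proof -
  have "0 \<le> (\<bar>a\<bar> - \<bar>b\<bar>)\<^sup>2" by simp
  then have "2 * (\<bar>a\<bar> * \<bar>b\<bar>) \<le> a\<^sup>2 + b\<^sup>2"
    by (simp add: power2_eq_square algebra_simps)
  moreover have "0 \<le> \<bar>a\<bar> * \<bar>b\<bar>" by simp
  ultimately have "\<bar>a\<bar> * \<bar>b\<bar> \<le> a\<^sup>2 + b\<^sup>2" by linarith
  then show ?thesis by (simp add: abs_mult)
qed

lemma set_le_abs: fixes f :: "'a \<Rightarrow> real"
  assumes "f \<in> borel_measurable N" shows "{x\<in>space N. c \<le> \<bar>f x\<bar>} \<in> sets N"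
  using borel_measurable_le[of "\<lambda>x. c" N "\<lambda>x. \<bar>f x\<bar>"] assms by simp

lemma set_less_abs: fixes f :: "'a \<Rightarrow> real"
  assumes "f \<in> borel_measurable N" shows "{x\<in>space N. \<bar>f x\<bar> < c} \<in> sets N"
  using borel_measurable_less[of "\<lambda>x. \<bar>f x\<bar>" N "\<lambda>x. c"] assms by simp

context finite_measure begin

definition L2 :: "('a \<Rightarrow> real) \<Rightarrow> bool" where
  "L2 f \<longleftrightarrow> f \<in> borel_measurable M \<and> integrable M (\<lambda>x. (f x)\<^sup>2)"

lemma L2_meas: "L2 f \<Longrightarrow> f \<in> borel_measurable M" by (simp add: L2_def)
lemma L2_sq: "L2 f \<Longrightarrow> integrable M (\<lambda>x. (f x)\<^sup>2)" by (simp add: L2_def)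
lemma L2_int: "L2 f \<Longrightarrow> integrable M f"
  using square_integrable_imp_integrable L2_def by blast

lemma L2_prod: assumes "L2 f" "L2 g" shows "integrable M (\<lambda>x. f x * g x)"
proof (rule Bochner_Integration.integrable_bound[where f="\<lambda>x. (f x)\<^sup>2 + (g x)\<^sup>2"])
  show "integrable M (\<lambda>x. (f x)\<^sup>2 + (g x)\<^sup>2)" using assms by (auto simp: L2_def)
  show "(\<lambda>x. f x * g x) \<in> borel_measurable M" using assms by (auto simp: L2_def)
  show "AE x in M. norm (f x * g x) \<le> norm ((f x)\<^sup>2 + (g x)\<^sup>2)"
    using abs_mult_le_sq by auto
qed

lemma L2_const: "L2 (\<lambda>x. c)" by (simp add: L2_def)

lemma L2_add: assumes "L2 f" "L2 g" shows "L2 (\<lambda>x. f x + g x)"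
  unfolding L2_def
proof
  show "(\<lambda>x. f x + g x) \<in> borel_measurable M" using assms by (auto simp: L2_def)
  show "integrable M (\<lambda>x. (f x + g x)\<^sup>2)"
  proof (rule Bochner_Integration.integrable_bound[where f="\<lambda>x. 2*(f x)\<^sup>2 + 2*(g x)\<^sup>2"])
    show "integrable M (\<lambda>x. 2*(f x)\<^sup>2 + 2*(g x)\<^sup>2)" using assms by (auto simp: L2_def)
    show "(\<lambda>x. (f x + g x)\<^sup>2) \<in> borel_measurable M" using assms by (auto simp: L2_def)
    show "AE x in M. norm ((f x + g x)\<^sup>2) \<le> norm (2*(f x)\<^sup>2 + 2*(g x)\<^sup>2)"
      using sq_add_le by auto
  qed
qed

lemma L2_cmult: assumes "L2 f" shows "L2 (\<lambda>x. c * f x)"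
  using assms by (auto simp: L2_def power_mult_distrib)

lemma L2_neg: assumes "L2 f" shows "L2 (\<lambda>x. - f x)"
  using L2_cmult[OF assms, of "-1"] by simp

lemma L2_diff: assumes "L2 f" "L2 g" shows "L2 (\<lambda>x. f x - g x)"
  using L2_add[OF assms(1) L2_neg[OF assms(2)]] by simp

lemma L2_sum: assumes "\<And>i. i \<in> I \<Longrightarrow> L2 (f i)" shows "L2 (\<lambda>x. \<Sum>i\<in>I. f i x)"
  using assms
proof (induction I rule: infinite_finite_induct)
  case (insert i I) then show ?case by (simp add: L2_add)
qed (auto simp: L2_const)

lemma L2_bmult: assumes "L2 f" "g \<in> borel_measurable M" "\<And>x. \<bar>g x\<bar> \<le> C"
  shows "L2 (\<lambda>x. g x * f x)"
  unfolding L2_def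
proof
  show "(\<lambda>x. g x * f x) \<in> borel_measurable M" using assms by (auto simp: L2_def)
  show "integrable M (\<lambda>x. (g x * f x)\<^sup>2)"
  proof (rule Bochner_Integration.integrable_bound[where f="\<lambda>x. C\<^sup>2 * (f x)\<^sup>2"])
    show "integrable M (\<lambda>x. C\<^sup>2 * (f x)\<^sup>2)" using assms by (auto simp: L2_def)
    show "(\<lambda>x. (g x * f x)\<^sup>2) \<in> borel_measurable M" using assms by (auto simp: L2_def)
    show "AE x in M. norm ((g x * f x)\<^sup>2) \<le> norm (C\<^sup>2 * (f x)\<^sup>2)"
    proof (intro AE_I2)
      fix x
      have "\<bar>g x\<bar>\<^sup>2 \<le> C\<^sup>2" using assms(3)[of x] by (meson abs_ge_zero order_trans power_mono)
      then have "(g x)\<^sup>2 * (f x)\<^sup>2 \<le> C\<^sup>2 * (f x)\<^sup>2" by (simp add: mult_right_mono)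
      then show "norm ((g x * f x)\<^sup>2) \<le> norm (C\<^sup>2 * (f x)\<^sup>2)"
        by (simp add: power_mult_distrib)
    qed
  qed
qed

end



locale mart = prob_space +
  fixes F :: "nat \<Rightarrow> 'a measure" and d :: "nat \<Rightarrow> 'a \<Rightarrow> real"
  assumes Fsp: "\<And>n. space (F n) = space M"
  and Fsub: "\<And>n. sets (F n) \<subseteq> sets M"
  and Fmono: "\<And>n. sets (F n) \<subseteq> sets (F (Suc n))"
  and dmeas: "\<And>n. d n \<in> borel_measurable (F (Suc n))"
  and dL2: "\<And>n. L2 (d n)"
  and orth: "\<And>n g. g \<in> borel_measurable (F n) \<Longrightarrow> L2 g \<Longrightarrow> integral\<^sup>L M (\<lambda>x. g x * d n x) = 0"
begin

lemma Fmono_le: "m \<le> n \<Longrightarrow> sets (F m) \<subseteq> sets (F n)"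
  using lift_Suc_mono_le[of "\<lambda>n. sets (F n)"] Fmono by blast

lemma measF: "f \<in> borel_measurable (F m) \<Longrightarrow> m \<le> n \<Longrightarrow> f \<in> borel_measurable (F n)"
  using meas_transfer Fsp Fmono_le by metis

lemma measM: "f \<in> borel_measurable (F m) \<Longrightarrow> f \<in> borel_measurable M"
  using meas_transfer Fsp Fsub by metis

lemma setsM: "A \<in> sets (F m) \<Longrightarrow> A \<in> sets M" using Fsub by blast

definition T :: "nat \<Rightarrow> nat \<Rightarrow> 'a \<Rightarrow> real" where
  "T k n x = (\<Sum>j\<in>{k..<n}. d j x)"

lemma T_measF: "T k n \<in> borel_measurable (F n)"
proof -
  have "\<And>j. j \<in> {k..<n} \<Longrightarrow> d j \<in> borel_measurable (F n)"
    using dmeas measF by (metis atLeastLessThan_iff Suc_leI)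
  then show ?thesis unfolding T_def[abs_def] by (rule borel_measurable_sum)
qed

lemma T_L2: "L2 (T k n)"
  unfolding T_def[abs_def] by (rule L2_sum) (rule dL2)

lemma orth': "g \<in> borel_measurable (F n) \<Longrightarrow> L2 g \<Longrightarrow> n \<le> j \<Longrightarrow> integral\<^sup>L M (\<lambda>x. g x * d j x) = 0"
  using orth measF by blast

lemma T_Suc: "k \<le> N \<Longrightarrow> T k (Suc N) x = T k N x + d N x"
  unfolding T_def by simp

lemma T_sq: "integral\<^sup>L M (\<lambda>x. (T k N x)\<^sup>2) = (\<Sum>j\<in>{k..<N}. integral\<^sup>L M (\<lambda>x. (d j x)\<^sup>2))"
proof (induction N)
  case 0 then show ?case by (simp add: T_def)
next
  case (Suc N)
  show ?case
  proof (cases "k \<le> N")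
    case True
    have i1: "integrable M (\<lambda>x. (T k N x)\<^sup>2)" using T_L2 L2_sq by blast
    have i2: "integrable M (\<lambda>x. T k N x * d N x)" using T_L2 dL2 L2_prod by blast
    have i3: "integrable M (\<lambda>x. (d N x)\<^sup>2)" using dL2 L2_sq by blast
    have o: "integral\<^sup>L M (\<lambda>x. T k N x * d N x) = 0"
      using orth[OF T_measF T_L2] .
    have "(\<lambda>x. (T k (Suc N) x)\<^sup>2) = (\<lambda>x. (T k N x)\<^sup>2 + 2 * (T k N x * d N x) + (d N x)\<^sup>2)"
      using True by (simp add: T_Suc power2_sum fun_eq_iff algebra_simps)
    then have "integral\<^sup>L M (\<lambda>x. (T k (Suc N) x)\<^sup>2) =
        integral\<^sup>L M (\<lambda>x. (T k N x)\<^sup>2) + 2 * integral\<^sup>L M (\<lambda>x. T k N x * d N x) + integral\<^sup>L M (\<lambda>x. (d N x)\<^sup>2)"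
      using i1 i2 i3 by simp
    then show ?thesis using Suc o True by simp
  next
    case False
    then have "{k..<Suc N} = {}" by auto
    then show ?thesis by (simp add: T_def)
  qed
qed

lemma T_split: "k \<le> n \<Longrightarrow> n \<le> N \<Longrightarrow> T k N x = T k n x + (\<Sum>j\<in>{n..<N}. d j x)"
  unfolding T_def by (metis sum.atLeastLessThan_concat)

lemma T_ind_mono:
  assumes kn: "k \<le> n" and nN: "n \<le> N" and A: "A \<in> sets (F n)"
  shows "integral\<^sup>L M (\<lambda>x. (T k n x)\<^sup>2 * indicator A x) \<le> integral\<^sup>L M (\<lambda>x. (T k N x)\<^sup>2 * indicator A x)"
proof -
  define R where "R x = (\<Sum>j\<in>{n..<N}. d j x)" for x
  define g where "g x = indicator A x * T k n x" for x
  have gm: "g \<in> borel_measurable (F n)" unfolding g_def using T_measF A by measurable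
  have im: "indicator A \<in> borel_measurable M" using setsM[OF A] by simp
  have gL: "L2 g" unfolding g_def
    by (rule L2_bmult[OF T_L2 im, where C=1]) (auto simp: indicator_def)
  have RL: "L2 R" unfolding R_def[abs_def] by (rule L2_sum) (rule dL2)
  have o: "integral\<^sup>L M (\<lambda>x. g x * R x) = 0"
  proof -
    have "integral\<^sup>L M (\<lambda>x. g x * R x) = integral\<^sup>L M (\<lambda>x. \<Sum>j\<in>{n..<N}. g x * d j x)"
      by (simp add: R_def sum_distrib_left)
    also have "\<dots> = (\<Sum>j\<in>{n..<N}. integral\<^sup>L M (\<lambda>x. g x * d j x))"
      by (rule Bochner_Integration.integral_sum[where f="\<lambda>j x. g x * d j x"]) (use gL dL2 L2_prod in blast)
    also have "\<dots> = 0" using orth'[OF gm gL] by simp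
    finally show ?thesis .
  qed
  have eq: "(\<lambda>x. (T k N x)\<^sup>2 * indicator A x) =
      (\<lambda>x. (T k n x)\<^sup>2 * indicator A x + 2 * (g x * R x) + (R x)\<^sup>2 * indicator A x)"
    using T_split[OF kn nN] by (auto simp: R_def g_def indicator_def power2_sum fun_eq_iff)
  have i1: "integrable M (\<lambda>x. (T k n x)\<^sup>2 * indicator A x)"
    using A setsM T_L2 L2_sq integrable_real_mult_indicator by blast
  have i2: "integrable M (\<lambda>x. g x * R x)" using gL RL L2_prod by blast
  have i3: "integrable M (\<lambda>x. (R x)\<^sup>2 * indicator A x)"
    using A setsM RL L2_sq integrable_real_mult_indicator by blast
  have "integral\<^sup>L M (\<lambda>x. (T k N x)\<^sup>2 * indicator A x) =
     integral\<^sup>L M (\<lambda>x. (T k n x)\<^sup>2 * indicator A x) + 2 * integral\<^sup>L M (\<lambda>x. g x * R x)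
      + integral\<^sup>L M (\<lambda>x. (R x)\<^sup>2 * indicator A x)"
    unfolding eq using i1 i2 i3 by simp
  moreover have "0 \<le> integral\<^sup>L M (\<lambda>x. (R x)\<^sup>2 * indicator A x)"
    by (rule integral_nonneg_AE) (auto simp: indicator_def)
  ultimately show ?thesis using o by simp
qed

lemma kolmogorov:
  assumes kN: "k \<le> N" and e: "0 < \<epsilon>"
  shows "\<epsilon>\<^sup>2 * measure M {x\<in>space M. \<exists>n\<in>{k..N}. \<epsilon> \<le> \<bar>T k n x\<bar>}
     \<le> (\<Sum>j\<in>{k..<N}. integral\<^sup>L M (\<lambda>x. (d j x)\<^sup>2))"
proof -
  define Q where "Q n = {x \<in> space M. \<forall>l\<in>{k..<n}. \<bar>T k l x\<bar> < \<epsilon>}" for n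
  have Qs: "Q n \<in> sets (F n)" for n
  proof (induction n)
    case 0
    have "Q 0 = space (F 0)" by (simp add: Q_def Fsp)
    then show ?case by (metis sets.top)
  next
    case (Suc n)
    have eq: "Q (Suc n) = Q n \<inter> {x\<in>space (F n). k \<le> n \<longrightarrow> \<bar>T k n x\<bar> < \<epsilon>}"
      unfolding Q_def Fsp atLeastLessThanSuc by auto
    have S: "{x\<in>space (F n). k \<le> n \<longrightarrow> \<bar>T k n x\<bar> < \<epsilon>} \<in> sets (F n)"
    proof (cases "k \<le> n")
      case True then show ?thesis using set_less_abs[OF T_measF[of k n], of \<epsilon>] by simp
    next
      case False then show ?thesis by simp
    qed
    have "Q (Suc n) \<in> sets (F n)" unfolding eq by (rule sets.Int[OF Suc S])
    then show ?case using Fmono[of n] by blast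
  qed
  define A where "A n = Q n \<inter> {x\<in>space M. \<epsilon> \<le> \<bar>T k n x\<bar>}" for n
  have As: "A n \<in> sets (F n)" for n
  proof -
    have S: "{x\<in>space M. \<epsilon> \<le> \<bar>T k n x\<bar>} \<in> sets (F n)"
      using set_le_abs[OF T_measF[of k n], of \<epsilon>] Fsp[of n] by simp
    show ?thesis unfolding A_def by (rule sets.Int[OF Qs S])
  qed
  have AsM: "A n \<in> sets M" for n using As setsM by blast
  have disj: "disjoint_family_on A {k..N}"
    unfolding disjoint_family_on_def
  proof (intro ballI impI)
    fix n m assume "n \<in> {k..N}" "m \<in> {k..N}" "n \<noteq> m"
    show "A n \<inter> A m = {}"
    proof (cases "n < m")
      case True then show ?thesis using \<open>n \<in> {k..N}\<close> by (force simp: A_def Q_def)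
    next
      case False then have "m < n" using \<open>n \<noteq> m\<close> by simp
      then show ?thesis using \<open>m \<in> {k..N}\<close> by (force simp: A_def Q_def)
    qed
  qed
  have sub: "{x\<in>space M. \<exists>n\<in>{k..N}. \<epsilon> \<le> \<bar>T k n x\<bar>} \<subseteq> (\<Union>n\<in>{k..N}. A n)"
  proof
    fix x assume x: "x \<in> {x\<in>space M. \<exists>n\<in>{k..N}. \<epsilon> \<le> \<bar>T k n x\<bar>}"
    have xs: "x \<in> space M" using x by simp
    have ex: "\<exists>n. n\<in>{k..N} \<and> \<epsilon> \<le> \<bar>T k n x\<bar>" using x by blast
    define n0 where "n0 = (LEAST n. n\<in>{k..N} \<and> \<epsilon> \<le> \<bar>T k n x\<bar>)"
    have n0: "n0\<in>{k..N} \<and> \<epsilon> \<le> \<bar>T k n0 x\<bar>"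
      unfolding n0_def by (rule LeastI_ex[OF ex])
    have "\<forall>l\<in>{k..<n0}. \<bar>T k l x\<bar> < \<epsilon>"
    proof
      fix l assume l: "l \<in> {k..<n0}"
      then have "l < n0" by simp
      then have "\<not> (l\<in>{k..N} \<and> \<epsilon> \<le> \<bar>T k l x\<bar>)"
        unfolding n0_def by (rule not_less_Least)
      moreover have "l \<in> {k..N}" using l n0 by simp
      ultimately show "\<bar>T k l x\<bar> < \<epsilon>" by simp
    qed
    then have "x \<in> Q n0" using xs by (simp add: Q_def)
    then have "x \<in> A n0" using xs n0 by (simp add: A_def)
    then show "x \<in> (\<Union>n\<in>{k..N}. A n)" using n0 by blast
  qed
  have "measure M {x\<in>space M. \<exists>n\<in>{k..N}. \<epsilon> \<le> \<bar>T k n x\<bar>} \<le> measure M (\<Union>n\<in>{k..N}. A n)"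
    by (rule finite_measure_mono[OF sub]) (use AsM in auto)
  also have "\<dots> = (\<Sum>n\<in>{k..N}. measure M (A n))"
    by (rule measure_finite_Union) (use AsM disj in auto)
  finally have m1: "\<epsilon>\<^sup>2 * measure M {x\<in>space M. \<exists>n\<in>{k..N}. \<epsilon> \<le> \<bar>T k n x\<bar>}
      \<le> (\<Sum>n\<in>{k..N}. \<epsilon>\<^sup>2 * measure M (A n))"
    unfolding sum_distrib_left[symmetric] by (rule mult_left_mono) auto
  have step: "\<epsilon>\<^sup>2 * measure M (A n) \<le> integral\<^sup>L M (\<lambda>x. (T k N x)\<^sup>2 * indicator (A n) x)"
    if n: "n \<in> {k..N}" for n
  proof -
    have "\<epsilon>\<^sup>2 * measure M (A n) = integral\<^sup>L M (\<lambda>x. \<epsilon>\<^sup>2 * indicator (A n) x)"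
      using AsM[of n] by (simp add: Int_absorb2 sets.sets_into_space)
    also have "\<dots> \<le> integral\<^sup>L M (\<lambda>x. (T k n x)\<^sup>2 * indicator (A n) x)"
    proof (rule integral_mono)
      show "integrable M (\<lambda>x. \<epsilon>\<^sup>2 * indicator (A n) x)"
        using integrable_real_mult_indicator[OF AsM[of n], of "\<lambda>x. \<epsilon>\<^sup>2"] by simp
      show "integrable M (\<lambda>x. (T k n x)\<^sup>2 * indicator (A n) x)"
        using AsM T_L2 L2_sq integrable_real_mult_indicator by blast
      fix x
      show "\<epsilon>\<^sup>2 * indicator (A n) x \<le> (T k n x)\<^sup>2 * indicator (A n) x"
      proof (cases "x \<in> A n")
        case True
        then have "\<epsilon> \<le> \<bar>T k n x\<bar>" by (simp add: A_def)
        then have "\<epsilon>\<^sup>2 \<le> \<bar>T k n x\<bar>\<^sup>2" using e by (intro power_mono) auto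
        then show ?thesis using True by simp
      qed simp
    qed
    also have "\<dots> \<le> integral\<^sup>L M (\<lambda>x. (T k N x)\<^sup>2 * indicator (A n) x)"
      using T_ind_mono[of k n N "A n"] n As by auto
    finally show ?thesis .
  qed
  have intA: "integrable M (\<lambda>x. (T k N x)\<^sup>2 * indicator B x)" if "B \<in> sets M" for B
    using integrable_real_mult_indicator[OF that L2_sq[OF T_L2[of k N]]] .
  have "(\<Sum>n\<in>{k..N}. integral\<^sup>L M (\<lambda>x. (T k N x)\<^sup>2 * indicator (A n) x))
      = integral\<^sup>L M (\<lambda>x. \<Sum>n\<in>{k..N}. (T k N x)\<^sup>2 * indicator (A n) x)"
    by (rule Bochner_Integration.integral_sum[where f="\<lambda>n x. (T k N x)\<^sup>2 * indicator (A n) x", symmetric])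
       (rule intA[OF AsM])
  also have "\<dots> = integral\<^sup>L M (\<lambda>x. (T k N x)\<^sup>2 * indicator (\<Union>n\<in>{k..N}. A n) x)"
  proof -
    have "\<And>x. (\<Sum>n\<in>{k..N}. (T k N x)\<^sup>2 * indicator (A n) x) = (T k N x)\<^sup>2 * indicator (\<Union>n\<in>{k..N}. A n) x"
      unfolding sum_distrib_left[symmetric] indicator_UN_disjoint[OF finite_atLeastAtMost disj] ..
    then have "(\<lambda>x. \<Sum>n\<in>{k..N}. (T k N x)\<^sup>2 * indicator (A n) x) = (\<lambda>x. (T k N x)\<^sup>2 * indicator (\<Union>n\<in>{k..N}. A n) x)"
      by (rule ext)
    then show ?thesis by (rule arg_cong)
  qed
  also have "\<dots> \<le> integral\<^sup>L M (\<lambda>x. (T k N x)\<^sup>2)"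
  proof (rule integral_mono)
    show "integrable M (\<lambda>x. (T k N x)\<^sup>2 * indicator (\<Union>n\<in>{k..N}. A n) x)"
      by (rule intA) (use AsM in auto)
    show "integrable M (\<lambda>x. (T k N x)\<^sup>2)" using T_L2 L2_sq by blast
    fix x show "(T k N x)\<^sup>2 * indicator (\<Union>n\<in>{k..N}. A n) x \<le> (T k N x)\<^sup>2"
      by (cases "x \<in> (\<Union>n\<in>{k..N}. A n)") auto
  qed
  also have "\<dots> = (\<Sum>j\<in>{k..<N}. integral\<^sup>L M (\<lambda>x. (d j x)\<^sup>2))" by (rule T_sq)
  finally have "(\<Sum>n\<in>{k..N}. integral\<^sup>L M (\<lambda>x. (T k N x)\<^sup>2 * indicator (A n) x))
     \<le> (\<Sum>j\<in>{k..<N}. integral\<^sup>L M (\<lambda>x. (d j x)\<^sup>2))" .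
  moreover have "(\<Sum>n\<in>{k..N}. \<epsilon>\<^sup>2 * measure M (A n))
     \<le> (\<Sum>n\<in>{k..N}. integral\<^sup>L M (\<lambda>x. (T k N x)\<^sup>2 * indicator (A n) x))"
    by (rule sum_mono) (rule step)
  ultimately show ?thesis using m1 by linarith
qed

lemma T_measM: "T k n \<in> borel_measurable M" using measM[OF T_measF] .

lemma mart_AE_conv:
  assumes summ: "summable (\<lambda>n. integral\<^sup>L M (\<lambda>x. (d n x)\<^sup>2))"
  shows "AE x in M. convergent (\<lambda>n. \<Sum>j<n. d j x)"
proof -
  define f where "f n = integral\<^sup>L M (\<lambda>x. (d n x)\<^sup>2)" for n
  have f0: "0 \<le> f n" for n unfolding f_def by (rule integral_nonneg_AE) auto
  have sf: "summable f" using summ unfolding f_def[abs_def] .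
  define tail where "tail k = suminf f - (\<Sum>i<k. f i)" for k
  have tail0: "tail \<longlonglongrightarrow> 0"
    unfolding tail_def using tendsto_diff[OF tendsto_const summable_LIMSEQ[OF sf], of "suminf f"] by simp
  have sumle: "(\<Sum>j\<in>{k..<N}. f j) \<le> tail k" if "k \<le> N" for k N
  proof -
    have "(\<Sum>j\<in>{k..<N}. f j) = (\<Sum>j<N. f j) - (\<Sum>j<k. f j)"
      using sum_diff_nat_ivl[of 0 k N f] that by (simp add: atLeast0LessThan)
    moreover have "(\<Sum>j<N. f j) \<le> suminf f" by (rule sum_le_suminf[OF sf]) (auto intro: f0)
    ultimately show ?thesis unfolding tail_def by simp
  qed
  define c where "c p = 1 / real (Suc p)" for p
  have c0: "0 < c p" for p unfolding c_def by simp
  define BN where "BN p k N = {x\<in>space M. \<exists>n\<in>{k..N}. c p \<le> \<bar>T k n x\<bar>}" for p k N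
  define Bad where "Bad p k = (\<Union>N. BN p k N)" for p k
  have BNs: "BN p k N \<in> sets M" for p k N
  proof -
    have "BN p k N = (\<Union>n\<in>{k..N}. {x\<in>space M. c p \<le> \<bar>T k n x\<bar>})" unfolding BN_def by auto
    also have "\<dots> \<in> sets M" using set_le_abs[OF T_measM] by auto
    finally show ?thesis .
  qed
  have inc: "incseq (BN p k)" for p k unfolding incseq_def BN_def by fastforce
  have BNle: "measure M (BN p k N) \<le> tail k / (c p)\<^sup>2" for p k N
  proof (cases "k \<le> N")
    case True
    have "(c p)\<^sup>2 * measure M (BN p k N) \<le> (\<Sum>j\<in>{k..<N}. f j)"
      unfolding BN_def f_def by (rule kolmogorov[OF True c0])
    also have "\<dots> \<le> tail k" using sumle[OF True] .
    finally show ?thesis using c0[of p] by (simp add: field_simps)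
  next
    case False
    then have "BN p k N = {}" unfolding BN_def by auto
    moreover have "0 \<le> tail k" using sumle[of k k] by simp
    ultimately show ?thesis by simp
  qed
  have Badle: "measure M (Bad p k) \<le> tail k / (c p)\<^sup>2" for p k
  proof -
    have "(\<lambda>N. measure M (BN p k N)) \<longlonglongrightarrow> measure M (Bad p k)"
      unfolding Bad_def by (rule finite_Lim_measure_incseq) (use BNs inc in auto)
    then show ?thesis by (rule LIMSEQ_le_const2) (use BNle in auto)
  qed
  have Bads: "Bad p k \<in> sets M" for p k unfolding Bad_def using BNs by auto
  define Nul where "Nul p = (\<Inter>k. Bad p k)" for p
  have Nuls: "Nul p \<in> sets M" for p unfolding Nul_def using Bads by auto
  have Nul0: "measure M (Nul p) = 0" for p
  proof -
    have le: "measure M (Nul p) \<le> tail k / (c p)\<^sup>2" for k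
    proof -
      have "measure M (Nul p) \<le> measure M (Bad p k)"
        by (rule finite_measure_mono) (auto simp: Nul_def intro: Bads)
      then show ?thesis using Badle[of p k] by simp
    qed
    have "(\<lambda>k. tail k / (c p)\<^sup>2) \<longlonglongrightarrow> 0 / (c p)\<^sup>2"
      by (rule tendsto_divide[OF tail0 tendsto_const]) (use c0[of p] in simp)
    then have "measure M (Nul p) \<le> 0"
      by (intro LIMSEQ_le[OF tendsto_const, where x="measure M (Nul p)"]) (use le in auto)
    then show ?thesis by (simp add: antisym)
  qed
  have Nulnull: "Nul p \<in> null_sets M" for p
    using Nul0[of p] Nuls[of p] by (intro null_setsI) (simp add: emeasure_eq_measure)
  have NN: "(\<Union>p. Nul p) \<in> null_sets M" using Nulnull by blast
  show ?thesis
  proof (rule AE_I'[OF NN], rule subsetI)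
    fix x assume x: "x \<in> {x\<in>space M. \<not> convergent (\<lambda>n. \<Sum>j<n. d j x)}"
    show "x \<in> (\<Union>p. Nul p)"
    proof (rule ccontr)
      assume "x \<notin> (\<Union>p. Nul p)"
      then have "\<forall>p. \<exists>k. x \<notin> Bad p k" unfolding Nul_def by blast
      then have good: "\<forall>p. \<exists>k. \<forall>n\<ge>k. \<bar>T k n x\<bar> < c p"
        using x unfolding Bad_def BN_def by (auto simp: not_le) (meson atLeastAtMost_iff order_refl not_le)
      have split: "(\<Sum>j<n. d j x) = (\<Sum>j<k. d j x) + T k n x" if "k \<le> n" for k n
        using that unfolding T_def by (metis atLeast0LessThan sum.atLeastLessThan_concat zero_le)
      have "Cauchy (\<lambda>n. \<Sum>j<n. d j x)"
      proof (rule metric_CauchyI)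
        fix e :: real assume e: "0 < e"
        obtain q where q: "q > 0" "inverse (real q) < e / 2" using ex_inverse_of_nat_less[of "e/2"] e by auto
        obtain p where p: "q = Suc p" using q(1) by (cases q) auto
        have cp: "c p < e / 2" using q p by (simp add: c_def inverse_eq_divide)
        obtain k where k: "\<forall>n\<ge>k. \<bar>T k n x\<bar> < c p" using good by blast
        show "\<exists>M. \<forall>m\<ge>M. \<forall>n\<ge>M. dist (\<Sum>j<m. d j x) (\<Sum>j<n. d j x) < e"
        proof (intro exI allI impI)
          fix m n assume m: "k \<le> m" and n: "k \<le> n"
          have "dist (\<Sum>j<m. d j x) (\<Sum>j<n. d j x) = \<bar>T k m x - T k n x\<bar>"
            unfolding split[OF m] split[OF n] dist_real_def by simp
          also have "\<dots> \<le> \<bar>T k m x\<bar> + \<bar>T k n x\<bar>" by simp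
          also have "\<dots> < e" using k[rule_format, OF m] k[rule_format, OF n] cp by linarith
          finally show "dist (\<Sum>j<m. d j x) (\<Sum>j<n. d j x) < e" .
        qed
      qed
      then show False using x Cauchy_convergent_iff by blast
    qed
  qed
qed

end



lemma scalar_to_zero:
  fixes a b \<eta> :: "nat \<Rightarrow> real" and c :: real
  assumes a0: "\<And>k. 0 \<le> a k" and c: "0 < c"
    and eta_pos: "\<And>k. 0 < \<eta> k" and eta_lim: "\<eta> \<longlonglongrightarrow> 0" and div: "\<not> summable \<eta>"
    and recur: "\<exists>K. \<forall>k\<ge>K. a (Suc k) \<le> (1 - c * \<eta> k) * a k + \<eta> k * b k"
    and b: "b \<longlonglongrightarrow> 0"
  shows "a \<longlonglongrightarrow> 0"
proof -
  have main: "\<exists>N. \<forall>k\<ge>N. a k \<le> \<epsilon>" if e: "0 < \<epsilon>" for \<epsilon>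
  proof -
    obtain K where K: "\<forall>k\<ge>K. a (Suc k) \<le> (1 - c * \<eta> k) * a k + \<eta> k * b k" using recur by blast
    have "eventually (\<lambda>k. b k < c * \<epsilon> / 2) sequentially"
      using b e c by (intro order_tendstoD(2)) auto
    then obtain K2 where K2: "\<forall>k\<ge>K2. b k < c * \<epsilon> / 2" by (auto simp: eventually_sequentially)
    have "eventually (\<lambda>k. \<eta> k < 1 / c) sequentially"
      using eta_lim c by (intro order_tendstoD(2)) auto
    then obtain K3 where K3: "\<forall>k\<ge>K3. \<eta> k < 1 / c" by (auto simp: eventually_sequentially)
    define K1 where "K1 = max K (max K2 K3)"
    have stepA: "a (Suc k) \<le> a k - c * \<epsilon> / 2 * \<eta> k" if "k \<ge> K1" "a k \<ge> \<epsilon>" for k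
    proof -
      have "a (Suc k) \<le> (1 - c * \<eta> k) * a k + \<eta> k * b k" using K that(1) by (simp add: K1_def)
      also have "\<dots> = a k - c * \<eta> k * a k + \<eta> k * b k" by (simp add: algebra_simps)
      also have "\<dots> \<le> a k - c * \<eta> k * \<epsilon> + \<eta> k * (c * \<epsilon> / 2)"
      proof -
        have "c * \<eta> k * \<epsilon> \<le> c * \<eta> k * a k"
          using that(2) c eta_pos[of k] by (intro mult_left_mono) auto
        moreover have "\<eta> k * b k \<le> \<eta> k * (c * \<epsilon> / 2)"
          using K2 that(1) eta_pos[of k] by (intro mult_left_mono) (auto simp: K1_def less_imp_le)
        ultimately show ?thesis by linarith
      qed
      also have "\<dots> = a k - c * \<epsilon> / 2 * \<eta> k" by (simp add: algebra_simps)
      finally show ?thesis .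
    qed
    have stepB: "a (Suc k) \<le> \<epsilon>" if "k \<ge> K1" "a k \<le> \<epsilon>" for k
    proof -
      have ce: "c * \<eta> k \<le> 1" using K3 that(1) c by (auto simp: K1_def field_simps)
      have "a (Suc k) \<le> (1 - c * \<eta> k) * a k + \<eta> k * b k" using K that(1) by (simp add: K1_def)
      also have "\<dots> \<le> (1 - c * \<eta> k) * \<epsilon> + \<eta> k * (c * \<epsilon> / 2)"
      proof -
        have "(1 - c * \<eta> k) * a k \<le> (1 - c * \<eta> k) * \<epsilon>"
          using that(2) ce by (intro mult_left_mono) auto
        moreover have "\<eta> k * b k \<le> \<eta> k * (c * \<epsilon> / 2)"
          using K2 that(1) eta_pos[of k] by (intro mult_left_mono) (auto simp: K1_def less_imp_le)
        ultimately show ?thesis by linarith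
      qed
      also have "\<dots> = \<epsilon> - c * \<epsilon> / 2 * \<eta> k" by (simp add: algebra_simps)
      also have "\<dots> \<le> \<epsilon>" using c e eta_pos[of k] by simp
      finally show ?thesis .
    qed
    have "\<exists>k\<ge>K1. a k \<le> \<epsilon>"
    proof (rule ccontr)
      assume "\<not> (\<exists>k\<ge>K1. a k \<le> \<epsilon>)"
      then have big: "\<forall>k\<ge>K1. \<epsilon> \<le> a k" by auto
      have dec: "a (K1 + n) \<le> a K1 - c * \<epsilon> / 2 * (\<Sum>j<n. \<eta> (K1 + j))" for n
      proof (induction n)
        case 0 then show ?case by simp
      next
        case (Suc n)
        have "a (K1 + Suc n) = a (Suc (K1 + n))" by simp
        also have "\<dots> \<le> a (K1 + n) - c * \<epsilon> / 2 * \<eta> (K1 + n)"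
          using stepA big by simp
        also have "\<dots> \<le> a K1 - c * \<epsilon> / 2 * (\<Sum>j<Suc n. \<eta> (K1 + j))"
          using Suc by (simp add: algebra_simps)
        finally show ?case .
      qed
      have "\<not> summable (\<lambda>j. \<eta> (j + K1))" using div summable_iff_shift[of \<eta> K1] by simp
      then have "\<not> (\<forall>n. (\<Sum>j<n. \<eta> (K1 + j)) \<le> a K1 / (c * \<epsilon> / 2))"
        using summableI_nonneg_bounded[of "\<lambda>j. \<eta> (j + K1)" "a K1 / (c * \<epsilon> / 2)"] eta_pos
        by (auto simp: less_imp_le add.commute)
      then obtain n where n: "(\<Sum>j<n. \<eta> (K1 + j)) > a K1 / (c * \<epsilon> / 2)" by (auto simp: not_le)
      have cep: "0 < c * \<epsilon> / 2" using c e by simp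
      then have "c * \<epsilon> / 2 * (\<Sum>j<n. \<eta> (K1 + j)) > a K1"
        using n by (simp add: field_simps)
      then have "a (K1 + n) < 0" using dec[of n] by linarith
      then show False using a0[of "K1+n"] by simp
    qed
    then obtain k0 where k0: "k0 \<ge> K1" "a k0 \<le> \<epsilon>" by blast
    have "\<forall>k\<ge>k0. a k \<le> \<epsilon>"
    proof (intro allI impI)
      fix k assume "k0 \<le> k"
      then show "a k \<le> \<epsilon>"
      proof (induction k rule: dec_induct)
        case base then show ?case using k0 by simp
      next
        case (step k) then show ?case using stepB k0 by simp
      qed
    qed
    then show ?thesis by blast
  qed
  show ?thesis
  proof (rule LIMSEQ_I)
    fix r :: real assume r: "0 < r"
    obtain N where N: "\<forall>k\<ge>N. a k \<le> r / 2" using main[of "r/2"] r by auto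
    show "\<exists>no. \<forall>n\<ge>no. norm (a n - 0) < r"
      using N a0 r by (intro exI[of _ N]) (auto simp: abs_of_nonneg intro: le_less_trans[of _ "r/2"])
  qed
qed

lemma norm_sq_vec: "(norm (v::real^'m))\<^sup>2 = (\<Sum>i\<in>UNIV. (v$i)\<^sup>2)"
  unfolding power2_norm_eq_inner inner_vec_def by (simp add: power2_eq_square)

lemma inner_vec_real: "(u::real^'m) \<bullet> v = (\<Sum>i\<in>UNIV. u$i * v$i)"
  by (simp add: inner_vec_def)

lemma det_conv:
  fixes e Mv :: "nat \<Rightarrow> real^'m" and lam :: "'m \<Rightarrow> real" and B :: "real^'m^'m"
    and \<eta> :: "nat \<Rightarrow> real" and L :: "real^'m"
  assumes lam0: "\<And>i. 0 < lam i" and lam1: "\<And>i. lam i \<le> 1"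
    and mu: "0 < \<mu>" and Bpos: "\<And>u. \<mu> * (norm u)\<^sup>2 \<le> u \<bullet> (B *v u)"
    and eta_pos: "\<And>k. 0 < \<eta> k" and eta_lim: "\<eta> \<longlonglongrightarrow> 0" and div: "\<not> summable \<eta>"
    and Mconv: "Mv \<longlonglongrightarrow> L"
    and recur: "\<And>k i. e (Suc k) $ i = e k $ i - \<eta> k * lam i * (B *v e k) $ i + (Mv (Suc k) $ i - Mv k $ i)"
  shows "e \<longlonglongrightarrow> 0"
proof -
  define lm where "lm = Min (range lam)"
  have lm0: "0 < lm" unfolding lm_def using lam0 by (subst Min_gr_iff) auto
  have lmle: "lm \<le> lam i" for i unfolding lm_def by (rule Min_le) auto
  have lm1: "lm \<le> 1" using lmle[of undefined] lam1[of undefined] by simp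
  obtain K where K0: "0 < K" and K: "\<And>v. norm (B *v v) \<le> norm v * K"
    using bounded_linear.pos_bounded[OF matrix_vector_mul_bounded_linear[of B]] by blast
  define Nw where "Nw v = norm (\<chi> i. (v::real^'m) $ i / sqrt (lam i))" for v
  have Nw_sq: "(Nw v)\<^sup>2 = (\<Sum>i\<in>UNIV. (v$i)\<^sup>2 / lam i)" for v
    unfolding Nw_def norm_sq_vec using lam0 by (simp add: power_divide less_imp_le)
  have Nw0: "0 \<le> Nw v" for v unfolding Nw_def by simp
  have Nw_ge: "norm v \<le> Nw v" for v
  proof -
    have "(norm v)\<^sup>2 \<le> (Nw v)\<^sup>2" unfolding Nw_sq norm_sq_vec
    proof (rule sum_mono)
      fix i
      show "(v $ i)\<^sup>2 \<le> (v $ i)\<^sup>2 / lam i"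
        using lam0[of i] lam1[of i] by (simp add: le_divide_eq mult_left_le)
    qed
    then show ?thesis using Nw0 by (rule power2_le_imp_le)
  qed
  have Nw_le: "lm * (Nw v)\<^sup>2 \<le> (norm v)\<^sup>2" for v
  proof -
    have "lm * (Nw v)\<^sup>2 = (\<Sum>i\<in>UNIV. lm * ((v$i)\<^sup>2 / lam i))" unfolding Nw_sq sum_distrib_left ..
    also have "\<dots> \<le> (\<Sum>i\<in>UNIV. (v$i)\<^sup>2)"
    proof (rule sum_mono)
      fix i
      have "lm * (v $ i)\<^sup>2 \<le> lam i * (v $ i)\<^sup>2" using lmle[of i] by (simp add: mult_right_mono)
      then show "lm * ((v $ i)\<^sup>2 / lam i) \<le> (v $ i)\<^sup>2"
        using lam0[of i] by (simp add: divide_le_eq mult.commute)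
    qed
    finally show ?thesis unfolding norm_sq_vec .
  qed
  have Nw_add: "Nw (v + w) \<le> Nw v + Nw w" for v w
  proof -
    have "(\<chi> i. (v + w) $ i / sqrt (lam i)) = (\<chi> i. v $ i / sqrt (lam i)) + (\<chi> i. w $ i / sqrt (lam i))"
      by (simp add: vec_eq_iff add_divide_distrib)
    then show ?thesis unfolding Nw_def by (simp add: norm_triangle_ineq)
  qed
  have Nw_scale: "Nw (c *\<^sub>R v) = \<bar>c\<bar> * Nw v" for c v
  proof -
    have "(\<chi> i. (c *\<^sub>R v) $ i / sqrt (lam i)) = c *\<^sub>R (\<chi> i. v $ i / sqrt (lam i))"
      by (simp add: vec_eq_iff)
    then show ?thesis unfolding Nw_def by simp
  qed
  define C where "C v = (\<chi> i. lam i * (B *v v) $ i)" for v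
  have sumlam: "(\<Sum>i\<in>UNIV. lam i * (w $ i)\<^sup>2) \<le> (norm w)\<^sup>2" for w :: "real^'m"
  proof -
    have "(\<Sum>i\<in>UNIV. lam i * (w $ i)\<^sup>2) \<le> (\<Sum>i\<in>UNIV. (w $ i)\<^sup>2)"
    proof (rule sum_mono)
      fix i
      have "0 \<le> (w $ i)\<^sup>2" by simp
      then show "lam i * (w $ i)\<^sup>2 \<le> (w $ i)\<^sup>2"
        by (rule mult_left_le_one_le[OF _ less_imp_le[OF lam0[of i]] lam1[of i]])
    qed
    then show ?thesis by (simp add: norm_sq_vec)
  qed
  have BK: "(norm (B *v w))\<^sup>2 \<le> K\<^sup>2 * (norm w)\<^sup>2" for w
  proof -
    have "norm (B *v w) \<le> K * norm w" using K[of w] by (simp add: mult.commute)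
    then have "(norm (B *v w))\<^sup>2 \<le> (K * norm w)\<^sup>2" by (rule power_mono) simp
    then show ?thesis by (simp add: power_mult_distrib)
  qed
  have NwC: "Nw (C s) \<le> K * norm s" for s
  proof -
    have "(Nw (C s))\<^sup>2 = (\<Sum>i\<in>UNIV. lam i * ((B *v s) $ i)\<^sup>2)"
      unfolding Nw_sq C_def using lam0 by (simp add: power2_eq_square less_imp_neq[THEN not_sym] mult_ac)
    also have "\<dots> \<le> (norm (B *v s))\<^sup>2" by (rule sumlam)
    also have "\<dots> \<le> (K * norm s)\<^sup>2" using BK[of s] by (simp add: power_mult_distrib)
    finally have "(Nw (C s))\<^sup>2 \<le> (K * norm s)\<^sup>2" .
    moreover have "0 \<le> K * norm s" using K0 by simp
    ultimately show ?thesis by (rule power2_le_imp_le)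
  qed
  have KI: "Nw (v - h *\<^sub>R C v) \<le> (1 - h * (\<mu> * lm / 2)) * Nw v"
    if h: "0 < h" "h * K\<^sup>2 \<le> \<mu> * lm" "h * (\<mu> * lm) \<le> 1" for v h
  proof -
    have "(Nw (v - h *\<^sub>R C v))\<^sup>2 = (\<Sum>i\<in>UNIV. (v$i - h * (lam i * (B *v v) $ i))\<^sup>2 / lam i)"
      unfolding Nw_sq C_def by simp
    also have "\<dots> = (\<Sum>i\<in>UNIV. (v$i)\<^sup>2 / lam i - 2 * h * (v$i * (B *v v) $ i) + h\<^sup>2 * (lam i * ((B *v v) $ i)\<^sup>2))"
    proof (rule sum.cong[OF refl])
      fix i
      show "(v$i - h * (lam i * (B *v v) $ i))\<^sup>2 / lam i = (v$i)\<^sup>2 / lam i - 2 * h * (v$i * (B *v v) $ i) + h\<^sup>2 * (lam i * ((B *v v) $ i)\<^sup>2)"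
        using lam0[of i] by (simp add: power2_eq_square field_simps)
    qed
    also have "\<dots> = (Nw v)\<^sup>2 - 2 * h * (v \<bullet> (B *v v)) + h\<^sup>2 * (\<Sum>i\<in>UNIV. lam i * ((B *v v) $ i)\<^sup>2)"
      unfolding Nw_sq inner_vec_real by (simp add: sum.distrib sum_subtractf sum_distrib_left)
    also have "\<dots> \<le> (Nw v)\<^sup>2 - 2 * h * (\<mu> * (norm v)\<^sup>2) + h\<^sup>2 * (K\<^sup>2 * (norm v)\<^sup>2)"
    proof -
      have a: "(\<Sum>i\<in>UNIV. lam i * ((B *v v) $ i)\<^sup>2) \<le> K\<^sup>2 * (norm v)\<^sup>2"
        using sumlam[of "B *v v"] BK[of v] by linarith
      have b: "2 * h * (\<mu> * (norm v)\<^sup>2) \<le> 2 * h * (v \<bullet> (B *v v))"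
        using Bpos[of v] h(1) by simp
      have "h\<^sup>2 * (\<Sum>i\<in>UNIV. lam i * ((B *v v) $ i)\<^sup>2) \<le> h\<^sup>2 * (K\<^sup>2 * (norm v)\<^sup>2)"
        using a by (simp add: mult_left_mono)
      then show ?thesis using b by linarith
    qed
    also have "\<dots> \<le> (Nw v)\<^sup>2 - h * (\<mu> * (norm v)\<^sup>2)"
    proof -
      have "\<mu> * lm \<le> \<mu> * 1" using lm1 mu by (intro mult_left_mono) auto
      then have "h * K\<^sup>2 \<le> \<mu>" using h(2) by simp
      then have "h\<^sup>2 * (K\<^sup>2 * (norm v)\<^sup>2) \<le> h * (\<mu> * (norm v)\<^sup>2)"
        using h(1) by (simp add: power2_eq_square mult_left_mono mult_right_mono mult.assoc[symmetric])
      moreover have "2 * h * (\<mu> * (norm v)\<^sup>2) = 2 * (h * (\<mu> * (norm v)\<^sup>2))" by simp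
      ultimately show ?thesis by linarith
    qed
    also have "\<dots> \<le> (Nw v)\<^sup>2 - h * (\<mu> * (lm * (Nw v)\<^sup>2))"
      using Nw_le[of v] h(1) mu by (simp add: mult_left_mono)
    also have "\<dots> = (1 - h * (\<mu> * lm)) * (Nw v)\<^sup>2" by (simp add: algebra_simps)
    also have "\<dots> \<le> ((1 - h * (\<mu> * lm / 2)) * Nw v)\<^sup>2"
    proof -
      have "(1 - h * (\<mu> * lm / 2))\<^sup>2 = 1 - h * (\<mu> * lm) + (h * (\<mu> * lm / 2))\<^sup>2"
        by (simp add: power2_eq_square algebra_simps)
      moreover have "0 \<le> (h * (\<mu> * lm / 2))\<^sup>2" by simp
      ultimately have "1 - h * (\<mu> * lm) \<le> (1 - h * (\<mu> * lm / 2))\<^sup>2" by linarith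
      then have "(1 - h * (\<mu> * lm)) * (Nw v)\<^sup>2 \<le> (1 - h * (\<mu> * lm / 2))\<^sup>2 * (Nw v)\<^sup>2"
        by (rule mult_right_mono) simp
      then show ?thesis by (simp only: power_mult_distrib)
    qed
    finally have sq: "(Nw (v - h *\<^sub>R C v))\<^sup>2 \<le> ((1 - h * (\<mu> * lm / 2)) * Nw v)\<^sup>2" .
    have "0 \<le> 1 - h * (\<mu> * lm / 2)" using h(3) h(1) mu lm0 by simp
    then have "0 \<le> (1 - h * (\<mu> * lm / 2)) * Nw v" using Nw0[of v] by simp
    with sq show ?thesis by (rule power2_le_imp_le)
  qed
  define S where "S k = L - Mv k" for k
  have S0: "S \<longlonglongrightarrow> 0" unfolding S_def using tendsto_diff[OF tendsto_const Mconv, of L] by simp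
  define u where "u k = e k + S k" for k
  have urec: "u (Suc k) = (u k - \<eta> k *\<^sub>R C (u k)) + \<eta> k *\<^sub>R C (S k)" for k
    unfolding vec_eq_iff u_def C_def S_def
    by (simp add: recur matrix_vector_right_distrib algebra_simps)
  define a where "a k = Nw (u k)" for k
  have ev1: "eventually (\<lambda>k. \<eta> k * K\<^sup>2 < \<mu> * lm) sequentially"
  proof -
    have "(\<lambda>k. \<eta> k * K\<^sup>2) \<longlonglongrightarrow> 0 * K\<^sup>2" by (rule tendsto_mult[OF eta_lim tendsto_const])
    then show ?thesis using mu lm0 by (intro order_tendstoD(2)) auto
  qed
  have ev2: "eventually (\<lambda>k. \<eta> k * (\<mu> * lm) < 1) sequentially"
  proof -
    have "(\<lambda>k. \<eta> k * (\<mu> * lm)) \<longlonglongrightarrow> 0 * (\<mu> * lm)" by (rule tendsto_mult[OF eta_lim tendsto_const])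
    then show ?thesis by (intro order_tendstoD(2)) auto
  qed
  obtain K1 where K1: "\<forall>k\<ge>K1. \<eta> k * K\<^sup>2 < \<mu> * lm \<and> \<eta> k * (\<mu> * lm) < 1"
    using eventually_conj[OF ev1 ev2] by (auto simp: eventually_sequentially)
  have arec: "\<exists>N. \<forall>k\<ge>N. a (Suc k) \<le> (1 - \<mu> * lm / 2 * \<eta> k) * a k + \<eta> k * (K * norm (S k))"
  proof (intro exI[of _ K1] allI impI)
    fix k assume k: "K1 \<le> k"
    have "a (Suc k) \<le> Nw (u k - \<eta> k *\<^sub>R C (u k)) + Nw (\<eta> k *\<^sub>R C (S k))"
      unfolding a_def urec by (rule Nw_add)
    also have "\<dots> \<le> (1 - \<eta> k * (\<mu> * lm / 2)) * a k + \<eta> k * (K * norm (S k))"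
    proof -
      have "Nw (u k - \<eta> k *\<^sub>R C (u k)) \<le> (1 - \<eta> k * (\<mu> * lm / 2)) * a k"
        unfolding a_def using K1 k eta_pos[of k] by (intro KI) auto
      moreover have "Nw (\<eta> k *\<^sub>R C (S k)) \<le> \<eta> k * (K * norm (S k))"
        unfolding Nw_scale using eta_pos[of k] NwC[of "S k"] by (simp add: mult_left_mono)
      ultimately show ?thesis by linarith
    qed
    finally show "a (Suc k) \<le> (1 - \<mu> * lm / 2 * \<eta> k) * a k + \<eta> k * (K * norm (S k))"
      by (simp add: mult.commute)
  qed
  have bK: "(\<lambda>k. K * norm (S k)) \<longlonglongrightarrow> 0"
    using tendsto_mult[OF tendsto_const tendsto_norm[OF S0], of K] by simp
  have a0: "a \<longlonglongrightarrow> 0"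
    by (rule scalar_to_zero[OF _ _ eta_pos eta_lim div arec bK]) (use Nw0 mu lm0 in \<open>auto simp: a_def\<close>)
  have "(\<lambda>k. norm (u k)) \<longlonglongrightarrow> 0"
    by (rule tendsto_sandwich[of "\<lambda>_. 0" _ _ a]) (use a0 Nw_ge in \<open>auto simp: a_def\<close>)
  then have "u \<longlonglongrightarrow> 0" by (simp add: tendsto_norm_zero_iff)
  then have "(\<lambda>k. u k - S k) \<longlonglongrightarrow> 0 - 0" by (intro tendsto_diff S0)
  then show ?thesis by (simp add: u_def)
qed




lemma inner_mat_transpose: "(u::real^'m) \<bullet> (A *v w) = (transpose A *v u) \<bullet> w"
  by (simp add: dot_lmul_matrix[symmetric])

lemma la_facts:
  fixes A :: "real^'n^'m"
  assumes rk: "rank A = CARD('m)"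
  shows "\<exists>\<mu>>0. \<forall>u. \<mu> * (norm u)\<^sup>2 \<le> u \<bullet> ((A ** transpose A) *v u)"
    and "\<And>v. (A ** transpose A) *v (matrix_inv (A ** transpose A) *v v) = v"
    and "\<And>u. u \<bullet> ((A ** transpose A) *v u) = (norm (transpose A *v u))\<^sup>2"
proof -
  have eq: "u \<bullet> ((A ** transpose A) *v u) = (norm (transpose A *v u))\<^sup>2" for u
    by (simp add: matrix_vector_mul_assoc[symmetric] inner_mat_transpose power2_norm_eq_inner)
  then show "\<And>u. u \<bullet> ((A ** transpose A) *v u) = (norm (transpose A *v u))\<^sup>2" .
  have "rank (transpose A) = CARD('m)" using rk rank_transpose by metis
  then have inj: "inj ((*v) (transpose A))" by (simp add: full_rank_injective)
  obtain \<beta> where b0: "\<beta> > 0" and b: "\<And>x. \<beta> * norm x \<le> norm (transpose A *v x)"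
    using linear_inj_bounded_below_pos[OF matrix_vector_mul_linear inj] by blast
  show "\<exists>\<mu>>0. \<forall>u. \<mu> * (norm u)\<^sup>2 \<le> u \<bullet> ((A ** transpose A) *v u)"
  proof (intro exI[of _ "\<beta>\<^sup>2"] conjI allI)
    show "0 < \<beta>\<^sup>2" using b0 by simp
    fix u
    have "(\<beta> * norm u)\<^sup>2 \<le> (norm (transpose A *v u))\<^sup>2"
      using b[of u] b0 by (intro power_mono) auto
    then show "\<beta>\<^sup>2 * (norm u)\<^sup>2 \<le> u \<bullet> ((A ** transpose A) *v u)"
      unfolding eq by (simp add: power_mult_distrib)
  qed
  have injB: "inj ((*v) (A ** transpose A))"
  proof (rule injI)
    fix x y assume "(A ** transpose A) *v x = (A ** transpose A) *v y"
    then have "(A ** transpose A) *v (x - y) = 0" by (simp add: matrix_vector_mult_diff_distrib)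
    then have "(norm (transpose A *v (x - y)))\<^sup>2 = 0" using eq[of "x - y"] by simp
    then have "transpose A *v (x - y) = 0" by simp
    then have "transpose A *v (x - y) = transpose A *v 0" by simp
    then have "x - y = 0" using inj by (meson injD)
    then show "x = y" by simp
  qed
  then have "invertible (A ** transpose A)"
    using matrix_left_invertible_injective invertible_left_inverse by blast
  then have "(A ** transpose A) ** matrix_inv (A ** transpose A) = mat 1"
    unfolding invertible_def matrix_inv_def by (metis (mono_tags, lifting) someI_ex)
  then show "\<And>v. (A ** transpose A) *v (matrix_inv (A ** transpose A) *v v) = v"
    by (simp add: matrix_vector_mul_assoc)
qed




locale kacz = prob_space M for M :: "'w measure" +
  fixes A :: "real^'n^'m"
    and X :: "'w \<Rightarrow> real^'n" and W :: "'w \<Rightarrow> real^'m" and Z :: "'w \<Rightarrow> 'm"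
    and Xs :: "nat \<Rightarrow> 'w \<Rightarrow> real^'n" and Ws :: "nat \<Rightarrow> 'w \<Rightarrow> real^'m"
    and Zs :: "nat \<Rightarrow> 'w \<Rightarrow> 'm"
    and \<eta> :: "nat \<Rightarrow> real" and x0 :: "real^'n"
    and \<alpha> :: "nat \<Rightarrow> 'w \<Rightarrow> real^'m"
  assumes full_rank: "rank A = CARD('m)"
    and X_meas: "X \<in> borel_measurable M"
    and X_sq: "integrable M (\<lambda>\<omega>. (norm (X \<omega>))\<^sup>2)"
    and W_meas: "W \<in> borel_measurable M"
    and W_sq: "integrable M (\<lambda>\<omega>. (norm (W \<omega>))\<^sup>2)"
    and Z_meas: "Z \<in> measurable M (count_space UNIV)"
    and Z_pos: "\<forall>i. measure M {\<omega> \<in> space M. Z \<omega> = i} > 0"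
    and Xs_meas: "\<forall>k\<ge>1. Xs k \<in> borel_measurable M"
    and Ws_meas: "\<forall>k\<ge>1. Ws k \<in> borel_measurable M"
    and Zs_meas: "\<forall>k\<ge>1. Zs k \<in> measurable M (count_space UNIV)"
    and Xs_distr: "\<forall>k\<ge>1. distr M borel (Xs k) = distr M borel X"
    and Ws_distr: "\<forall>k\<ge>1. distr M borel (Ws k) = distr M borel W"
    and Zs_distr: "\<forall>k\<ge>1. distr M (count_space UNIV) (Zs k) = distr M (count_space UNIV) Z"
    and indep: "indep_sets (kacz_events M Xs Ws Zs)
                  ({IX k | k. k \<ge> 1} \<union> {IW k | k. k \<ge> 1} \<union> {IZ k | k. k \<ge> 1})"
    and eta_pos: "\<forall>k. \<eta> k > 0"
    and eta_div: "\<not> summable \<eta>"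
    and eta_sq: "summable (\<lambda>k. (\<eta> k)\<^sup>2)"
    and alpha0: "\<forall>\<omega>. \<alpha> 0 \<omega> = 0"
    and alpha_rec: "\<forall>k \<omega>. \<alpha> (Suc k) \<omega> = \<alpha> k \<omega> + \<eta> k *\<^sub>R
          ((\<chi> i. if i = Zs (Suc k) \<omega>
                  then (A *v Xs (Suc k) \<omega> + Ws (Suc k) \<omega>) $ Zs (Suc k) \<omega> else 0)
           - unit_diag (Zs (Suc k) \<omega>) *v (A *v (x0 + transpose A *v \<alpha> k \<omega>)))"
begin

definition "Ifull = {IX k | k. k \<ge> 1} \<union> {IW k | k. k \<ge> 1} \<union> {IZ k | k. k \<ge> 1}"
definition "EE = kacz_events M Xs Ws Zs"
definition "sig S = sigma (space M) (\<Union>(EE ` S))"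

lemma EE_events: assumes "i \<in> Ifull" shows "EE i \<subseteq> events"
proof -
  have "\<forall>i\<in>Ifull. EE i \<subseteq> events" using indep unfolding indep_sets_def EE_def Ifull_def by (rule conjunct1)
  then show ?thesis using assms by blast
qed

lemma preimg_Int_stable: "Int_stable {f -` B \<inter> \<Omega> | B. B \<in> sets N}"
  unfolding Int_stable_def
proof (clarify)
  fix B1 B2 assume "B1 \<in> sets N" "B2 \<in> sets N"
  then show "\<exists>B. f -` B1 \<inter> \<Omega> \<inter> (f -` B2 \<inter> \<Omega>) = f -` B \<inter> \<Omega> \<and> B \<in> sets N"
    by (intro exI[of _ "B1 \<inter> B2"]) auto
qed

lemma preimg_Int_stable': "Int_stable {u. \<exists>B. u = f -` B \<inter> \<Omega>}"
  unfolding Int_stable_def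
proof (clarify)
  fix B1 B2
  show "\<exists>B. f -` B1 \<inter> \<Omega> \<inter> (f -` B2 \<inter> \<Omega>) = f -` B \<inter> \<Omega>"
    by (intro exI[of _ "B1 \<inter> B2"]) auto
qed

lemma EE_Int_stable: "Int_stable (EE i)"
  unfolding EE_def kacz_events_def by (cases i) (simp_all add: preimg_Int_stable preimg_Int_stable')

lemma UEE_Pow: "S \<subseteq> Ifull \<Longrightarrow> \<Union>(EE ` S) \<subseteq> Pow (space M)"
  using EE_events sets.sets_into_space by blast

lemma space_sig[simp]: "space (sig S) = space M"
  unfolding sig_def by (rule space_measure_of_conv)

lemma sets_sig: "S \<subseteq> Ifull \<Longrightarrow> sets (sig S) = sigma_sets (space M) (\<Union>(EE ` S))"
  unfolding sig_def by (rule sets_measure_of[OF UEE_Pow])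

lemma sets_sig_M: assumes "S \<subseteq> Ifull" shows "sets (sig S) \<subseteq> sets M"
proof -
  have "\<Union>(EE ` S) \<subseteq> sets M" using EE_events assms by blast
  then show ?thesis unfolding sets_sig[OF assms] by (rule sets.sigma_sets_subset)
qed

lemma sets_sig_mono: assumes "S \<subseteq> S'" "S' \<subseteq> Ifull" shows "sets (sig S) \<subseteq> sets (sig S')"
proof -
  have "S \<subseteq> Ifull" using assms by blast
  then show ?thesis unfolding sets_sig[OF \<open>S \<subseteq> Ifull\<close>] sets_sig[OF assms(2)]
    by (rule_tac sigma_sets_mono') (use assms(1) in blast)
qed

lemma meas_sig_M: assumes "f \<in> borel_measurable (sig S)" "S \<subseteq> Ifull" shows "f \<in> borel_measurable M"
  by (rule meas_transfer[OF assms(1)]) (simp_all add: sets_sig_M[OF assms(2)])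

lemma meas_sig_mono: assumes "f \<in> borel_measurable (sig S)" "S \<subseteq> S'" "S' \<subseteq> Ifull"
  shows "f \<in> borel_measurable (sig S')"
  by (rule meas_transfer[OF assms(1)]) (simp_all add: sets_sig_mono[OF assms(2,3)])

lemma in_sig: assumes "a \<in> EE i" "i \<in> S" "S \<subseteq> Ifull" shows "a \<in> sets (sig S)"
proof -
  have "a \<in> \<Union>(EE ` S)" using assms by blast
  then show ?thesis unfolding sets_sig[OF assms(3)] by (rule sigma_sets.Basic)
qed

lemma Xs_sig: assumes "IX j \<in> S" "S \<subseteq> Ifull" shows "Xs j \<in> borel_measurable (sig S)"
proof (rule measurableI)
  fix B :: "(real^'n) set" assume "B \<in> sets borel"
  then have "Xs j -` B \<inter> space M \<in> EE (IX j)" by (auto simp: EE_def kacz_events_def)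
  then show "Xs j -` B \<inter> space (sig S) \<in> sets (sig S)" using in_sig assms by simp
qed simp

lemma Ws_sig: assumes "IW j \<in> S" "S \<subseteq> Ifull" shows "Ws j \<in> borel_measurable (sig S)"
proof (rule measurableI)
  fix B :: "(real^'m) set" assume "B \<in> sets borel"
  then have "Ws j -` B \<inter> space M \<in> EE (IW j)" by (auto simp: EE_def kacz_events_def)
  then show "Ws j -` B \<inter> space (sig S) \<in> sets (sig S)" using in_sig assms by simp
qed simp

lemma Zs_sig: assumes "IZ j \<in> S" "S \<subseteq> Ifull" shows "Zs j \<in> measurable (sig S) (count_space UNIV)"
proof (rule measurableI)
  fix B :: "'m set" assume "B \<in> sets (count_space UNIV)"
  then have "Zs j -` B \<inter> space M \<in> EE (IZ j)" by (auto simp: EE_def kacz_events_def)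
  then show "Zs j -` B \<inter> space (sig S) \<in> sets (sig S)" using in_sig assms by simp
qed simp


lemma indep_set_mono: "indep_set SA SB \<Longrightarrow> SA' \<subseteq> SA \<Longrightarrow> SB' \<subseteq> SB \<Longrightarrow> indep_set SA' SB'"
  unfolding indep_set_def by (rule indep_sets_mono_sets) (auto split: bool.split)

lemma indep_two:
  assumes P: "P \<subseteq> Ifull" and Q: "Q \<subseteq> Ifull" and PQ: "P \<inter> Q = {}"
  shows "indep_set (sets (sig P)) (sets (sig Q))"
proof -
  define I where "I b = (if b then P else Q)" for b
  have "indep_sets EE (\<Union>b\<in>UNIV. I b)"
    by (rule indep_sets_mono_index[OF _ indep[folded EE_def Ifull_def]]) (use P Q in \<open>auto simp: I_def\<close>)
  moreover have "disjoint_family_on I UNIV"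
    using PQ unfolding disjoint_family_on_def I_def by auto
  ultimately have "indep_sets (\<lambda>b. sigma_sets (space M) (\<Union>i\<in>I b. EE i)) UNIV"
    by (intro indep_sets_collect_sigma) (auto intro: EE_Int_stable)
  then show ?thesis unfolding indep_set_def
    by (rule indep_sets_cong[THEN iffD1, rotated 2]) (auto simp: I_def sets_sig P Q split: bool.split)
qed

lemma indep_int:
  fixes f g :: "'w \<Rightarrow> real"
  assumes P: "P \<subseteq> Ifull" and Q: "Q \<subseteq> Ifull" and PQ: "P \<inter> Q = {}"
    and f: "f \<in> borel_measurable (sig P)" and g: "g \<in> borel_measurable (sig Q)"
    and fi: "integrable M f" and gi: "integrable M g"
  shows "integral\<^sup>L M (\<lambda>x. f x * g x) = integral\<^sup>L M f * integral\<^sup>L M g"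
proof -
  have fM: "f \<in> borel_measurable M" by (rule meas_sig_M[OF f P])
  have gM: "g \<in> borel_measurable M" by (rule meas_sig_M[OF g Q])
  have sf: "sigma_sets (space M) {f -` U \<inter> space M | U. U \<in> sets borel} \<subseteq> sets (sig P)"
  proof -
    have "{f -` U \<inter> space M | U. U \<in> sets borel} \<subseteq> sets (sig P)"
      using measurable_sets[OF f] by auto
    then show ?thesis using sets.sigma_sets_subset[of _ "sig P"] by simp
  qed
  have sg: "sigma_sets (space M) {g -` U \<inter> space M | U. U \<in> sets borel} \<subseteq> sets (sig Q)"
  proof -
    have "{g -` U \<inter> space M | U. U \<in> sets borel} \<subseteq> sets (sig Q)"
      using measurable_sets[OF g] by auto
    then show ?thesis using sets.sigma_sets_subset[of _ "sig Q"] by simp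
  qed
  have "indep_var borel f borel g"
    unfolding indep_var_eq using fM gM indep_set_mono[OF indep_two[OF P Q PQ] sf sg] by simp
  then show ?thesis by (rule indep_var_lebesgue_integral[OF _ fi gi])
qed


definition "lam i = measure M {\<omega>\<in>space M. Z \<omega> = i}"
definition "muY = integral\<^sup>L M (\<lambda>\<omega>. A *v X \<omega> + W \<omega>)"
definition "Bm = A ** transpose A"
definition "astar = matrix_inv Bm *v (muY - A *v x0)"
definition "e k \<omega> = \<alpha> k \<omega> - astar"
definition "r k \<omega> = A *v Xs k \<omega> + Ws k \<omega> - muY"
definition "zi k i \<omega> = (if Zs k \<omega> = i then 1 else 0 :: real)"

lemma Bm_astar: "Bm *v astar = muY - A *v x0"
  unfolding astar_def Bm_def by (rule la_facts(2)[OF full_rank])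

lemma unit_diag_mv: "(unit_diag j *v v) $ i = (if i = j then v $ j else 0)"
proof (cases "i = j")
  case True
  have "(unit_diag j *v v) $ i = (\<Sum>l\<in>UNIV. (if l = j then 1 else 0) * v $ l)"
    unfolding unit_diag_def matrix_vector_mult_def using True by (auto intro!: sum.cong)
  also have "\<dots> = (\<Sum>l\<in>UNIV. (if l = j then v $ l else 0))" by (rule sum.cong) auto
  also have "\<dots> = v $ j" by simp
  finally show ?thesis using True by simp
next
  case False
  then show ?thesis unfolding unit_diag_def matrix_vector_mult_def by simp
qed

lemma e_rec: "e (Suc k) \<omega> $ i = e k \<omega> $ i + \<eta> k * zi (Suc k) i \<omega> * (r (Suc k) \<omega> $ i - (Bm *v e k \<omega>) $ i)"
proof -
  have V: "A *v (x0 + transpose A *v \<alpha> k \<omega>) = muY + Bm *v e k \<omega>"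
  proof -
    have 1: "A *v (x0 + transpose A *v \<alpha> k \<omega>) = A *v x0 + Bm *v \<alpha> k \<omega>"
      by (simp only: matrix_vector_right_distrib matrix_vector_mul_assoc Bm_def)
    have a: "\<alpha> k \<omega> = e k \<omega> + astar" by (simp add: e_def)
    have 2: "Bm *v \<alpha> k \<omega> = Bm *v e k \<omega> + (muY - A *v x0)"
      by (simp only: a matrix_vector_right_distrib Bm_astar)
    show ?thesis unfolding 1 2 by (simp add: algebra_simps)
  qed
  have "\<alpha> (Suc k) \<omega> $ i = \<alpha> k \<omega> $ i + \<eta> k * ((if i = Zs (Suc k) \<omega> then (A *v Xs (Suc k) \<omega> + Ws (Suc k) \<omega>) $ Zs (Suc k) \<omega> else 0)
        - (if i = Zs (Suc k) \<omega> then (muY + Bm *v e k \<omega>) $ Zs (Suc k) \<omega> else 0))"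
    using alpha_rec unfolding V[symmetric] by (simp add: unit_diag_mv)
  then show ?thesis
    by (cases "Zs (Suc k) \<omega> = i") (auto simp: e_def r_def zi_def algebra_simps)
qed


lemma bl_meas: "bounded_linear T \<Longrightarrow> g \<in> borel_measurable N \<Longrightarrow> (\<lambda>x. T (g x)) \<in> borel_measurable N"
  by (rule borel_measurable_continuous_on[OF linear_continuous_on])

lemma bl_Av: "bounded_linear (\<lambda>x. (A *v x) $ i)"
  by (rule bounded_linear_compose[OF bounded_linear_vec_nth matrix_vector_mul_bounded_linear])

lemma zi_meas: "Zs j \<in> measurable N (count_space UNIV) \<Longrightarrow> zi j i \<in> borel_measurable N"
  unfolding zi_def[abs_def]
  by (rule measurable_compose[where f="Zs j" and g="\<lambda>z. if z = i then 1 else (0::real)"]) auto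

lemma zi_01: "0 \<le> zi j i \<omega>" "zi j i \<omega> \<le> 1" "zi j i \<omega> * zi j i \<omega> = zi j i \<omega>" "(zi j i \<omega>)\<^sup>2 = zi j i \<omega>"
  "\<bar>zi j i \<omega>\<bar> \<le> 1"
  by (auto simp: zi_def power2_eq_square)

lemma lam_pos: "0 < lam i" using Z_pos by (simp add: lam_def)
lemma lam_le1: "lam i \<le> 1" unfolding lam_def by (rule prob_le_1)

lemma Xs_M: "1 \<le> k \<Longrightarrow> Xs k \<in> borel_measurable M" using Xs_meas by auto
lemma Ws_M: "1 \<le> k \<Longrightarrow> Ws k \<in> borel_measurable M" using Ws_meas by auto
lemma Zs_M: "1 \<le> k \<Longrightarrow> Zs k \<in> measurable M (count_space UNIV)" using Zs_meas by auto

lemma Xs_int_eq: assumes k: "1 \<le> k" and f: "f \<in> borel_measurable borel"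
  shows "integral\<^sup>L M (\<lambda>\<omega>. f (Xs k \<omega>)) = integral\<^sup>L M (\<lambda>\<omega>. (f (X \<omega>)::real))"
    and "integrable M (\<lambda>\<omega>. f (Xs k \<omega>)) \<longleftrightarrow> integrable M (\<lambda>\<omega>. (f (X \<omega>)::real))"
proof -
  have d: "distr M borel (Xs k) = distr M borel X" using Xs_distr k by auto
  show "integral\<^sup>L M (\<lambda>\<omega>. f (Xs k \<omega>)) = integral\<^sup>L M (\<lambda>\<omega>. f (X \<omega>))"
    using integral_distr[OF Xs_M[OF k] f] integral_distr[OF X_meas f] d by simp
  show "integrable M (\<lambda>\<omega>. f (Xs k \<omega>)) \<longleftrightarrow> integrable M (\<lambda>\<omega>. f (X \<omega>))"
    using integrable_distr_eq[OF Xs_M[OF k] f] integrable_distr_eq[OF X_meas f] d by simp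
qed

lemma Ws_int_eq: assumes k: "1 \<le> k" and f: "f \<in> borel_measurable borel"
  shows "integral\<^sup>L M (\<lambda>\<omega>. f (Ws k \<omega>)) = integral\<^sup>L M (\<lambda>\<omega>. (f (W \<omega>)::real))"
    and "integrable M (\<lambda>\<omega>. f (Ws k \<omega>)) \<longleftrightarrow> integrable M (\<lambda>\<omega>. (f (W \<omega>)::real))"
proof -
  have d: "distr M borel (Ws k) = distr M borel W" using Ws_distr k by auto
  show "integral\<^sup>L M (\<lambda>\<omega>. f (Ws k \<omega>)) = integral\<^sup>L M (\<lambda>\<omega>. f (W \<omega>))"
    using integral_distr[OF Ws_M[OF k] f] integral_distr[OF W_meas f] d by simp
  show "integrable M (\<lambda>\<omega>. f (Ws k \<omega>)) \<longleftrightarrow> integrable M (\<lambda>\<omega>. f (W \<omega>))"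
    using integrable_distr_eq[OF Ws_M[OF k] f] integrable_distr_eq[OF W_meas f] d by simp
qed

lemma zi_mean: assumes k: "1 \<le> k" shows "integral\<^sup>L M (zi k i) = lam i"
proof -
  have d: "distr M (count_space UNIV) (Zs k) = distr M (count_space UNIV) Z" using Zs_distr k by auto
  have "integral\<^sup>L M (zi k i) = integral\<^sup>L M (indicator (Zs k -` {i} \<inter> space M))"
    by (rule Bochner_Integration.integral_cong) (auto simp: zi_def indicator_def)
  also have "\<dots> = measure M (Zs k -` {i} \<inter> space M)" by simp
  also have "\<dots> = measure (distr M (count_space UNIV) (Zs k)) {i}"
    by (rule measure_distr[symmetric, OF Zs_M[OF k]]) simp
  also have "\<dots> = measure M (Z -` {i} \<inter> space M)"
    unfolding d by (rule measure_distr[OF Z_meas]) simp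
  also have "Z -` {i} \<inter> space M = {\<omega>\<in>space M. Z \<omega> = i}" by auto
  finally show ?thesis by (simp add: lam_def)
qed


lemma L2_bl:
  fixes T :: "'b::{real_normed_vector, second_countable_topology} \<Rightarrow> real"
  assumes T: "bounded_linear T" and g: "g \<in> borel_measurable M"
    and gi: "integrable M (\<lambda>\<omega>. (norm (g \<omega>))\<^sup>2)"
  shows "L2 (\<lambda>\<omega>. T (g \<omega>))"
  unfolding L2_def
proof
  show "(\<lambda>\<omega>. T (g \<omega>)) \<in> borel_measurable M" by (rule bl_meas[OF T g])
  obtain K where K: "\<And>x. norm (T x) \<le> norm x * K" "0 < K" using bounded_linear.pos_bounded[OF T] by blast
  show "integrable M (\<lambda>\<omega>. (T (g \<omega>))\<^sup>2)"
  proof (rule Bochner_Integration.integrable_bound[where f="\<lambda>\<omega>. K\<^sup>2 * (norm (g \<omega>))\<^sup>2"])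
    show "integrable M (\<lambda>\<omega>. K\<^sup>2 * (norm (g \<omega>))\<^sup>2)" using gi by simp
    show "(\<lambda>\<omega>. (T (g \<omega>))\<^sup>2) \<in> borel_measurable M" using bl_meas[OF T g] by simp
    show "AE x in M. norm ((T (g x))\<^sup>2) \<le> norm (K\<^sup>2 * (norm (g x))\<^sup>2)"
    proof (rule AE_I2)
      fix x
      have "\<bar>T (g x)\<bar> \<le> K * norm (g x)" using K(1)[of "g x"] by (simp add: mult.commute)
      then have "\<bar>T (g x)\<bar>\<^sup>2 \<le> (K * norm (g x))\<^sup>2" by (rule power_mono) simp
      then show "norm ((T (g x))\<^sup>2) \<le> norm (K\<^sup>2 * (norm (g x))\<^sup>2)"
        by (simp add: power_mult_distrib)
    qed
  qed
qed

lemma norm_sq_meas: "(\<lambda>x::'b::{real_normed_vector,second_countable_topology}. (norm x)\<^sup>2) \<in> borel_measurable borel"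
  by measurable

lemma Xs_sq: "1 \<le> k \<Longrightarrow> integrable M (\<lambda>\<omega>. (norm (Xs k \<omega>))\<^sup>2)"
  using Xs_int_eq(2)[OF _ norm_sq_meas] X_sq by simp
lemma Ws_sq: "1 \<le> k \<Longrightarrow> integrable M (\<lambda>\<omega>. (norm (Ws k \<omega>))\<^sup>2)"
  using Ws_int_eq(2)[OF _ norm_sq_meas] W_sq by simp

lemma int_of_sq:
  fixes g :: "'w \<Rightarrow> 'b::{banach, second_countable_topology}"
  assumes g: "g \<in> borel_measurable M" and gi: "integrable M (\<lambda>\<omega>. (norm (g \<omega>))\<^sup>2)"
  shows "integrable M g"
proof -
  have "integrable M (\<lambda>\<omega>. norm (g \<omega>))"
  proof (rule Bochner_Integration.integrable_bound[where f="\<lambda>\<omega>. 1 + (norm (g \<omega>))\<^sup>2"])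
    show "integrable M (\<lambda>\<omega>. 1 + (norm (g \<omega>))\<^sup>2)" using gi by simp
    show "(\<lambda>\<omega>. norm (g \<omega>)) \<in> borel_measurable M" using g by simp
    show "AE x in M. norm (norm (g x)) \<le> norm (1 + (norm (g x))\<^sup>2)"
    proof (rule AE_I2)
      fix x
      have "0 \<le> (norm (g x) - 1/2)\<^sup>2" by simp
      then have "norm (g x) \<le> 1 + (norm (g x))\<^sup>2" by (simp add: power2_eq_square algebra_simps)
      then show "norm (norm (g x)) \<le> norm (1 + (norm (g x))\<^sup>2)" by simp
    qed
  qed
  then show ?thesis using integrable_norm_iff[OF g] by simp
qed

lemma muY_comp: "muY $ i = integral\<^sup>L M (\<lambda>\<omega>. (A *v X \<omega>) $ i) + integral\<^sup>L M (\<lambda>\<omega>. W \<omega> $ i)"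
proof -
  have Xi: "integrable M X" by (rule int_of_sq[OF X_meas X_sq])
  have Wi: "integrable M W" by (rule int_of_sq[OF W_meas W_sq])
  have AXi: "integrable M (\<lambda>\<omega>. A *v X \<omega>)"
    by (rule integrable_bounded_linear[OF matrix_vector_mul_bounded_linear Xi])
  have "muY $ i = integral\<^sup>L M (\<lambda>\<omega>. (A *v X \<omega> + W \<omega>) $ i)"
    unfolding muY_def
    by (rule integral_bounded_linear[OF bounded_linear_vec_nth, symmetric]) (use AXi Wi in simp)
  also have "\<dots> = integral\<^sup>L M (\<lambda>\<omega>. (A *v X \<omega>) $ i + W \<omega> $ i)" by simp
  also have "\<dots> = integral\<^sup>L M (\<lambda>\<omega>. (A *v X \<omega>) $ i) + integral\<^sup>L M (\<lambda>\<omega>. W \<omega> $ i)"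
    by (rule Bochner_Integration.integral_add)
       (use integrable_bounded_linear[OF bl_Av Xi] integrable_bounded_linear[OF bounded_linear_vec_nth Wi] in auto)
  finally show ?thesis .
qed

lemma r_comp: "(\<lambda>\<omega>. r k \<omega> $ i) = (\<lambda>\<omega>. (A *v Xs k \<omega>) $ i + Ws k \<omega> $ i - muY $ i)"
  by (simp add: r_def fun_eq_iff)

lemma bl_meas_borel: "bounded_linear T \<Longrightarrow> T \<in> borel_measurable borel"
  by (rule borel_measurable_continuous_onI[OF linear_continuous_on])

lemma AXs_L2: "1 \<le> k \<Longrightarrow> L2 (\<lambda>\<omega>. (A *v Xs k \<omega>) $ i)"
  by (rule L2_bl[OF bl_Av Xs_M Xs_sq])
lemma Wsc_L2: "1 \<le> k \<Longrightarrow> L2 (\<lambda>\<omega>. Ws k \<omega> $ i)"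
  by (rule L2_bl[OF bounded_linear_vec_nth Ws_M Ws_sq])

lemma r_L2: "1 \<le> k \<Longrightarrow> L2 (\<lambda>\<omega>. r k \<omega> $ i)"
  unfolding r_comp by (intro L2_diff L2_add AXs_L2 Wsc_L2 L2_const)

lemma r_mean: assumes k: "1 \<le> k" shows "integral\<^sup>L M (\<lambda>\<omega>. r k \<omega> $ i) = 0"
proof -
  have "integral\<^sup>L M (\<lambda>\<omega>. r k \<omega> $ i) =
      integral\<^sup>L M (\<lambda>\<omega>. (A *v Xs k \<omega>) $ i) + integral\<^sup>L M (\<lambda>\<omega>. Ws k \<omega> $ i) - muY $ i"
    unfolding r_comp using L2_int[OF AXs_L2[OF k]] L2_int[OF Wsc_L2[OF k]] by (simp add: prob_space)
  also have "integral\<^sup>L M (\<lambda>\<omega>. (A *v Xs k \<omega>) $ i) = integral\<^sup>L M (\<lambda>\<omega>. (A *v X \<omega>) $ i)"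
    by (rule Xs_int_eq(1)[OF k bl_meas_borel[OF bl_Av]])
  also have "integral\<^sup>L M (\<lambda>\<omega>. Ws k \<omega> $ i) = integral\<^sup>L M (\<lambda>\<omega>. W \<omega> $ i)"
    by (rule Ws_int_eq(1)[OF k bl_meas_borel[OF bounded_linear_vec_nth]])
  finally show ?thesis by (simp add: muY_comp)
qed

definition "Rb i = 3 * (integral\<^sup>L M (\<lambda>\<omega>. ((A *v X \<omega>) $ i)\<^sup>2) + integral\<^sup>L M (\<lambda>\<omega>. (W \<omega> $ i)\<^sup>2) + (muY $ i)\<^sup>2)"

lemma r_sq: assumes k: "1 \<le> k" shows "integral\<^sup>L M (\<lambda>\<omega>. (r k \<omega> $ i)\<^sup>2) \<le> Rb i"
proof -
  let ?a = "\<lambda>\<omega>. (A *v Xs k \<omega>) $ i" and ?b = "\<lambda>\<omega>. Ws k \<omega> $ i" and ?c = "muY $ i"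
  have ia: "integrable M (\<lambda>\<omega>. (?a \<omega>)\<^sup>2)" using L2_sq[OF AXs_L2[OF k]] .
  have ib: "integrable M (\<lambda>\<omega>. (?b \<omega>)\<^sup>2)" using L2_sq[OF Wsc_L2[OF k]] .
  have "integral\<^sup>L M (\<lambda>\<omega>. (r k \<omega> $ i)\<^sup>2) \<le> integral\<^sup>L M (\<lambda>\<omega>. 3 * ((?a \<omega>)\<^sup>2 + (?b \<omega>)\<^sup>2 + ?c\<^sup>2))"
  proof (rule integral_mono)
    show "integrable M (\<lambda>\<omega>. (r k \<omega> $ i)\<^sup>2)" using L2_sq[OF r_L2[OF k]] .
    show "integrable M (\<lambda>\<omega>. 3 * ((?a \<omega>)\<^sup>2 + (?b \<omega>)\<^sup>2 + ?c\<^sup>2))" using ia ib by simp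
    fix \<omega>
    have "0 \<le> (?a \<omega> - ?b \<omega>)\<^sup>2 + (?a \<omega> + ?c)\<^sup>2 + (?b \<omega> + ?c)\<^sup>2" by simp
    then show "(r k \<omega> $ i)\<^sup>2 \<le> 3 * ((?a \<omega>)\<^sup>2 + (?b \<omega>)\<^sup>2 + ?c\<^sup>2)"
      by (simp add: r_def power2_eq_square algebra_simps)
  qed
  also have "\<dots> = 3 * (integral\<^sup>L M (\<lambda>\<omega>. (?a \<omega>)\<^sup>2) + integral\<^sup>L M (\<lambda>\<omega>. (?b \<omega>)\<^sup>2) + ?c\<^sup>2)"
    using ia ib by (simp add: prob_space)
  also have "integral\<^sup>L M (\<lambda>\<omega>. (?a \<omega>)\<^sup>2) = integral\<^sup>L M (\<lambda>\<omega>. ((A *v X \<omega>) $ i)\<^sup>2)"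
    by (rule Xs_int_eq(1)[OF k, where f="\<lambda>x. ((A *v x) $ i)\<^sup>2"]) (use bl_meas_borel[OF bl_Av] in measurable)
  also have "integral\<^sup>L M (\<lambda>\<omega>. (?b \<omega>)\<^sup>2) = integral\<^sup>L M (\<lambda>\<omega>. (W \<omega> $ i)\<^sup>2)"
    by (rule Ws_int_eq(1)[OF k, where f="\<lambda>x. (x $ i)\<^sup>2"]) (use bl_meas_borel[OF bounded_linear_vec_nth] in measurable)
  finally show ?thesis unfolding Rb_def .
qed


definition "past k = {IX j |j. 1 \<le> j \<and> j \<le> k} \<union> {IW j |j. 1 \<le> j \<and> j \<le> k} \<union> {IZ j |j. 1 \<le> j \<and> j \<le> k}"
definition "Fs k = sig (past k)"

lemma past_sub: "past k \<subseteq> Ifull" unfolding past_def Ifull_def by auto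
lemma past_mono: "past k \<subseteq> past (Suc k)" unfolding past_def by auto
lemma past_Suc: "IX (Suc k) \<in> past (Suc k)" "IW (Suc k) \<in> past (Suc k)" "IZ (Suc k) \<in> past (Suc k)"
  unfolding past_def by auto

lemma Bm_comp: "(Bm *v v) $ i = (\<Sum>l\<in>UNIV. Bm $ i $ l * v $ l)"
  by (simp add: matrix_vector_mult_def)

lemma r_sig: assumes "IX j \<in> S" "IW j \<in> S" "S \<subseteq> Ifull"
  shows "(\<lambda>\<omega>. r j \<omega> $ i) \<in> borel_measurable (sig S)"
  unfolding r_comp
  by (intro borel_measurable_diff borel_measurable_add borel_measurable_const
       bl_meas[OF bl_Av Xs_sig[OF assms(1,3)]] bl_meas[OF bounded_linear_vec_nth Ws_sig[OF assms(2,3)]])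

lemma Bme_meas: "(\<And>l. (\<lambda>\<omega>. v \<omega> $ l) \<in> borel_measurable N) \<Longrightarrow> (\<lambda>\<omega>. (Bm *v v \<omega>) $ i) \<in> borel_measurable N"
  unfolding Bm_comp by (intro borel_measurable_sum borel_measurable_times borel_measurable_const) auto

lemma Bme_L2: "(\<And>l. L2 (\<lambda>\<omega>. v \<omega> $ l)) \<Longrightarrow> L2 (\<lambda>\<omega>. (Bm *v v \<omega>) $ i)"
  unfolding Bm_comp by (intro L2_sum L2_cmult) auto

lemma e_fun: "(\<lambda>\<omega>. e (Suc k) \<omega> $ i) =
   (\<lambda>\<omega>. e k \<omega> $ i + \<eta> k * (zi (Suc k) i \<omega> * (r (Suc k) \<omega> $ i - (Bm *v e k \<omega>) $ i)))"
  by (simp add: e_rec fun_eq_iff mult.assoc)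

lemma e_meas_L2: "(\<lambda>\<omega>. e k \<omega> $ i) \<in> borel_measurable (Fs k) \<and> L2 (\<lambda>\<omega>. e k \<omega> $ i)"
proof (induction k arbitrary: i)
  case 0
  have "(\<lambda>\<omega>. e 0 \<omega> $ i) = (\<lambda>\<omega>. - astar $ i)" by (simp add: e_def alpha0 fun_eq_iff)
  then show ?case by (simp add: L2_const)
next
  case (Suc k)
  have S1: "past (Suc k) \<subseteq> Ifull" by (rule past_sub)
  have em: "(\<lambda>\<omega>. e k \<omega> $ l) \<in> borel_measurable (Fs (Suc k))" for l
    using meas_sig_mono[OF Suc.IH[THEN conjunct1, unfolded Fs_def] past_mono S1] by (simp add: Fs_def)
  have eL: "L2 (\<lambda>\<omega>. e k \<omega> $ l)" for l using Suc.IH by blast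
  have zm: "zi (Suc k) i \<in> borel_measurable (Fs (Suc k))"
    unfolding Fs_def by (rule zi_meas[OF Zs_sig[OF past_Suc(3) S1]])
  have rm: "(\<lambda>\<omega>. r (Suc k) \<omega> $ i) \<in> borel_measurable (Fs (Suc k))"
    unfolding Fs_def by (rule r_sig[OF past_Suc(1,2) S1])
  have m: "(\<lambda>\<omega>. e (Suc k) \<omega> $ i) \<in> borel_measurable (Fs (Suc k))"
    unfolding e_fun
    by (intro borel_measurable_add borel_measurable_times borel_measurable_diff borel_measurable_const
        em zm rm Bme_meas)
  have zM: "zi (Suc k) i \<in> borel_measurable M" by (rule zi_meas[OF Zs_M]) simp
  have L: "L2 (\<lambda>\<omega>. e (Suc k) \<omega> $ i)"
    unfolding e_fun
    by (intro L2_add L2_cmult L2_bmult[OF _ zM, where C=1] L2_diff r_L2 Bme_L2 eL) (auto simp: zi_def)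
  show ?case using m L by blast
qed

lemma e_meas: "(\<lambda>\<omega>. e k \<omega> $ i) \<in> borel_measurable (Fs k)" using e_meas_L2 by blast
lemma e_L2: "L2 (\<lambda>\<omega>. e k \<omega> $ i)" using e_meas_L2 by blast


definition "Gset k = past k \<union> {IZ (Suc k)}"
definition "Hset k = {IX (Suc k), IW (Suc k)}"

lemma Gset_sub: "Gset k \<subseteq> Ifull" unfolding Gset_def using past_sub by (auto simp: Ifull_def)
lemma Hset_sub: "Hset k \<subseteq> Ifull" unfolding Hset_def by (auto simp: Ifull_def)
lemma Zset_sub: "{IZ (Suc k)} \<subseteq> Ifull" by (auto simp: Ifull_def)
lemma GH_disj: "Gset k \<inter> Hset k = {}" unfolding Gset_def Hset_def past_def by auto
lemma PZ_disj: "past k \<inter> {IZ (Suc k)} = {}" unfolding past_def by auto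

lemma zi_L2: "1 \<le> j \<Longrightarrow> L2 (zi j i)"
  using L2_bmult[OF L2_const[of 1] zi_meas[OF Zs_M], where C=1] zi_01 by simp

lemma E1: assumes f: "f \<in> borel_measurable (Fs k)" and fi: "integrable M f"
  shows "integral\<^sup>L M (\<lambda>\<omega>. f \<omega> * zi (Suc k) i \<omega>) = integral\<^sup>L M f * lam i"
proof -
  have "integral\<^sup>L M (\<lambda>\<omega>. f \<omega> * zi (Suc k) i \<omega>) = integral\<^sup>L M f * integral\<^sup>L M (zi (Suc k) i)"
    by (rule indep_int[OF past_sub Zset_sub PZ_disj f[unfolded Fs_def] zi_meas[OF Zs_sig[OF _ Zset_sub]] fi
          L2_int[OF zi_L2]]) auto
  then show ?thesis using zi_mean[of "Suc k"] by simp
qed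

lemma E2: assumes g: "g \<in> borel_measurable (sig (Gset k))" and gi: "integrable M g"
  shows "integral\<^sup>L M (\<lambda>\<omega>. g \<omega> * r (Suc k) \<omega> $ i) = 0"
proof -
  have "integral\<^sup>L M (\<lambda>\<omega>. g \<omega> * r (Suc k) \<omega> $ i) = integral\<^sup>L M g * integral\<^sup>L M (\<lambda>\<omega>. r (Suc k) \<omega> $ i)"
    by (rule indep_int[OF Gset_sub Hset_sub GH_disj g r_sig[OF _ _ Hset_sub] gi L2_int[OF r_L2]])
       (auto simp: Hset_def)
  then show ?thesis using r_mean[of "Suc k" i] by simp
qed

lemma Fs_G: "f \<in> borel_measurable (Fs k) \<Longrightarrow> f \<in> borel_measurable (sig (Gset k))"
  unfolding Fs_def by (rule meas_sig_mono[OF _ _ Gset_sub]) (auto simp: Gset_def)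

lemma zi_G: "zi (Suc k) i \<in> borel_measurable (sig (Gset k))"
  by (rule zi_meas[OF Zs_sig[OF _ Gset_sub]]) (simp add: Gset_def)

lemma Fs_M: "f \<in> borel_measurable (Fs k) \<Longrightarrow> f \<in> borel_measurable M"
  unfolding Fs_def using meas_sig_M past_sub by blast

definition "bb k i \<omega> = (Bm *v e k \<omega>) $ i"
definition "dd i n \<omega> = \<eta> n * (zi (Suc n) i \<omega> * (r (Suc n) \<omega> $ i - bb n i \<omega>) + lam i * bb n i \<omega>)"

lemma bb_meas: "bb k i \<in> borel_measurable (Fs k)"
  unfolding bb_def[abs_def] by (rule Bme_meas[OF e_meas])
lemma bb_L2: "L2 (bb k i)"
  unfolding bb_def[abs_def] by (rule Bme_L2[OF e_L2])

lemma orth_dd: assumes g: "g \<in> borel_measurable (Fs n)" and gL: "L2 g"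
  shows "integral\<^sup>L M (\<lambda>\<omega>. g \<omega> * dd i n \<omega>) = 0"
proof -
  let ?z = "zi (Suc n) i" and ?r = "\<lambda>\<omega>. r (Suc n) \<omega> $ i" and ?b = "bb n i"
  have gz: "L2 (\<lambda>\<omega>. ?z \<omega> * g \<omega>)"
    by (rule L2_bmult[OF gL zi_meas[OF Zs_M], where C=1]) (auto simp: zi_def)
  have gzm: "(\<lambda>\<omega>. ?z \<omega> * g \<omega>) \<in> borel_measurable (sig (Gset n))"
    using zi_G Fs_G[OF g] by (rule borel_measurable_times)
  have t1: "integral\<^sup>L M (\<lambda>\<omega>. (?z \<omega> * g \<omega>) * ?r \<omega>) = 0"
    by (rule E2[OF gzm L2_int[OF gz]])
  have gbm: "(\<lambda>\<omega>. g \<omega> * ?b \<omega>) \<in> borel_measurable (Fs n)"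
    using g bb_meas by (rule borel_measurable_times)
  have gbi: "integrable M (\<lambda>\<omega>. g \<omega> * ?b \<omega>)" by (rule L2_prod[OF gL bb_L2])
  have t2: "integral\<^sup>L M (\<lambda>\<omega>. (g \<omega> * ?b \<omega>) * ?z \<omega>) = integral\<^sup>L M (\<lambda>\<omega>. g \<omega> * ?b \<omega>) * lam i"
    by (rule E1[OF gbm gbi])
  have i1: "integrable M (\<lambda>\<omega>. (?z \<omega> * g \<omega>) * ?r \<omega>)" by (rule L2_prod[OF gz r_L2]) simp
  have i2: "integrable M (\<lambda>\<omega>. (?z \<omega> * g \<omega>) * ?b \<omega>)" by (rule L2_prod[OF gz bb_L2])
  have eq: "(\<lambda>\<omega>. g \<omega> * dd i n \<omega>) = (\<lambda>\<omega>. \<eta> n * ((?z \<omega> * g \<omega>) * ?r \<omega>) - \<eta> n * ((?z \<omega> * g \<omega>) * ?b \<omega>)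
      + (\<eta> n * lam i) * (g \<omega> * ?b \<omega>))"
    by (simp add: dd_def fun_eq_iff algebra_simps)
  have "integral\<^sup>L M (\<lambda>\<omega>. g \<omega> * dd i n \<omega>) = \<eta> n * integral\<^sup>L M (\<lambda>\<omega>. (?z \<omega> * g \<omega>) * ?r \<omega>)
      - \<eta> n * integral\<^sup>L M (\<lambda>\<omega>. (?z \<omega> * g \<omega>) * ?b \<omega>) + (\<eta> n * lam i) * integral\<^sup>L M (\<lambda>\<omega>. g \<omega> * ?b \<omega>)"
    unfolding eq using i1 i2 gbi by simp
  also have "integral\<^sup>L M (\<lambda>\<omega>. (?z \<omega> * g \<omega>) * ?b \<omega>) = integral\<^sup>L M (\<lambda>\<omega>. (g \<omega> * ?b \<omega>) * ?z \<omega>)"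
    by (simp add: mult_ac)
  finally show ?thesis using t1 t2 by simp
qed

lemma dd_meas: "dd i n \<in> borel_measurable (Fs (Suc n))"
proof -
  have S1: "past (Suc n) \<subseteq> Ifull" by (rule past_sub)
  have bm: "bb n i \<in> borel_measurable (Fs (Suc n))"
    using meas_sig_mono[OF bb_meas[unfolded Fs_def] past_mono S1] by (simp add: Fs_def)
  have zm: "zi (Suc n) i \<in> borel_measurable (Fs (Suc n))"
    unfolding Fs_def by (rule zi_meas[OF Zs_sig[OF past_Suc(3) S1]])
  have rm: "(\<lambda>\<omega>. r (Suc n) \<omega> $ i) \<in> borel_measurable (Fs (Suc n))"
    unfolding Fs_def by (rule r_sig[OF past_Suc(1,2) S1])
  show ?thesis unfolding dd_def[abs_def]
    by (intro borel_measurable_add borel_measurable_times borel_measurable_diff borel_measurable_const bm zm rm)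
qed

lemma dd_L2: "L2 (dd i n)"
  unfolding dd_def[abs_def]
  by (intro L2_cmult L2_add L2_bmult[OF _ zi_meas[OF Zs_M], where C=1] L2_diff r_L2 bb_L2)
     (auto simp: zi_def)


definition "KB = (SOME K. 0 < K \<and> (\<forall>v. norm (Bm *v v) \<le> norm v * K))"

lemma KB: "0 < KB" "norm (Bm *v v) \<le> norm v * KB"
proof -
  have "\<exists>K. 0 < K \<and> (\<forall>v. norm (Bm *v v) \<le> norm v * K)"
    using bounded_linear.pos_bounded[OF matrix_vector_mul_bounded_linear[of Bm]] by blast
  then have "0 < KB \<and> (\<forall>v. norm (Bm *v v) \<le> norm v * KB)" unfolding KB_def by (rule someI_ex)
  then show "0 < KB" "norm (Bm *v v) \<le> norm v * KB" by auto
qed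

lemma bb_sq: "(bb k i \<omega>)\<^sup>2 \<le> KB\<^sup>2 * (\<Sum>l\<in>UNIV. (e k \<omega> $ l)\<^sup>2)"
proof -
  have "\<bar>bb k i \<omega>\<bar> \<le> norm (Bm *v e k \<omega>)" unfolding bb_def by (rule component_le_norm_cart)
  also have "\<dots> \<le> KB * norm (e k \<omega>)" using KB(2)[of "e k \<omega>"] by (metis mult.commute)
  finally have "\<bar>bb k i \<omega>\<bar>\<^sup>2 \<le> (KB * norm (e k \<omega>))\<^sup>2" by (rule power_mono) simp
  then show ?thesis by (simp add: power_mult_distrib norm_sq_vec)
qed

definition "Q k = (\<Sum>i\<in>UNIV. integral\<^sup>L M (\<lambda>\<omega>. (e k \<omega> $ i)\<^sup>2) / lam i)"

lemma Ee_nonneg: "0 \<le> integral\<^sup>L M (\<lambda>\<omega>. (e k \<omega> $ i)\<^sup>2)"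
  by (rule integral_nonneg_AE) auto

lemma Q_nonneg: "0 \<le> Q k"
  unfolding Q_def using Ee_nonneg lam_pos by (intro sum_nonneg divide_nonneg_pos) auto

lemma sum_Ee_le_Q: "(\<Sum>l\<in>UNIV. integral\<^sup>L M (\<lambda>\<omega>. (e k \<omega> $ l)\<^sup>2)) \<le> Q k"
  unfolding Q_def
proof (rule sum_mono)
  fix l
  show "integral\<^sup>L M (\<lambda>\<omega>. (e k \<omega> $ l)\<^sup>2) \<le> integral\<^sup>L M (\<lambda>\<omega>. (e k \<omega> $ l)\<^sup>2) / lam l"
    using Ee_nonneg[of k l] lam_pos[of l] lam_le1[of l] by (simp add: le_divide_eq mult_left_le)
qed

lemma Ebb: "integral\<^sup>L M (\<lambda>\<omega>. (bb k i \<omega>)\<^sup>2) \<le> KB\<^sup>2 * Q k"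
proof -
  have "integral\<^sup>L M (\<lambda>\<omega>. (bb k i \<omega>)\<^sup>2) \<le> integral\<^sup>L M (\<lambda>\<omega>. KB\<^sup>2 * (\<Sum>l\<in>UNIV. (e k \<omega> $ l)\<^sup>2))"
  proof (rule integral_mono)
    show "integrable M (\<lambda>\<omega>. (bb k i \<omega>)\<^sup>2)" using L2_sq[OF bb_L2] .
    show "integrable M (\<lambda>\<omega>. KB\<^sup>2 * (\<Sum>l\<in>UNIV. (e k \<omega> $ l)\<^sup>2))"
      using L2_sq[OF e_L2] by simp
  qed (rule bb_sq)
  also have "\<dots> = KB\<^sup>2 * (\<Sum>l\<in>UNIV. integral\<^sup>L M (\<lambda>\<omega>. (e k \<omega> $ l)\<^sup>2))"
    using L2_sq[OF e_L2] by simp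
  also have "\<dots> \<le> KB\<^sup>2 * Q k" by (rule mult_left_mono[OF sum_Ee_le_Q]) simp
  finally show ?thesis .
qed

lemma comp_step:
  "integral\<^sup>L M (\<lambda>\<omega>. (e (Suc k) \<omega> $ i)\<^sup>2) \<le> integral\<^sup>L M (\<lambda>\<omega>. (e k \<omega> $ i)\<^sup>2)
     - 2 * \<eta> k * lam i * integral\<^sup>L M (\<lambda>\<omega>. e k \<omega> $ i * bb k i \<omega>) + 2 * (\<eta> k)\<^sup>2 * (Rb i + KB\<^sup>2 * Q k)"
proof -
  let ?z = "zi (Suc k) i" and ?r = "\<lambda>\<omega>. r (Suc k) \<omega> $ i" and ?b = "bb k i" and ?e = "\<lambda>\<omega>. e k \<omega> $ i"
  have zM: "?z \<in> borel_measurable M" by (rule zi_meas[OF Zs_M]) simp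
  have ze: "L2 (\<lambda>\<omega>. ?z \<omega> * ?e \<omega>)" by (rule L2_bmult[OF e_L2 zM, where C=1]) (auto simp: zi_def)
  have rL: "L2 ?r" by (rule r_L2) simp
  have zrb: "L2 (\<lambda>\<omega>. ?z \<omega> * (?r \<omega> - ?b \<omega>))"
    by (rule L2_bmult[OF L2_diff[OF rL bb_L2] zM, where C=1]) (auto simp: zi_def)
  have eq: "(\<lambda>\<omega>. (e (Suc k) \<omega> $ i)\<^sup>2) = (\<lambda>\<omega>. (?e \<omega>)\<^sup>2 + 2 * \<eta> k * ((?z \<omega> * ?e \<omega>) * ?r \<omega>)
      - 2 * \<eta> k * ((?z \<omega> * ?e \<omega>) * ?b \<omega>) + (\<eta> k)\<^sup>2 * (?z \<omega> * (?r \<omega> - ?b \<omega>))\<^sup>2)"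
    by (simp add: e_rec bb_def fun_eq_iff power2_eq_square algebra_simps)
  have i0: "integrable M (\<lambda>\<omega>. (?e \<omega>)\<^sup>2)" using L2_sq[OF e_L2] .
  have i1: "integrable M (\<lambda>\<omega>. (?z \<omega> * ?e \<omega>) * ?r \<omega>)" by (rule L2_prod[OF ze rL])
  have i2: "integrable M (\<lambda>\<omega>. (?z \<omega> * ?e \<omega>) * ?b \<omega>)" by (rule L2_prod[OF ze bb_L2])
  have i3: "integrable M (\<lambda>\<omega>. (?z \<omega> * (?r \<omega> - ?b \<omega>))\<^sup>2)" using L2_sq[OF zrb] .
  have "integral\<^sup>L M (\<lambda>\<omega>. (e (Suc k) \<omega> $ i)\<^sup>2) = integral\<^sup>L M (\<lambda>\<omega>. (?e \<omega>)\<^sup>2)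
      + 2 * \<eta> k * integral\<^sup>L M (\<lambda>\<omega>. (?z \<omega> * ?e \<omega>) * ?r \<omega>)
      - 2 * \<eta> k * integral\<^sup>L M (\<lambda>\<omega>. (?z \<omega> * ?e \<omega>) * ?b \<omega>)
      + (\<eta> k)\<^sup>2 * integral\<^sup>L M (\<lambda>\<omega>. (?z \<omega> * (?r \<omega> - ?b \<omega>))\<^sup>2)"
    unfolding eq using i0 i1 i2 i3 by simp
  also have "integral\<^sup>L M (\<lambda>\<omega>. (?z \<omega> * ?e \<omega>) * ?r \<omega>) = 0"
  proof (rule E2[OF _ L2_int[OF ze]])
    show "(\<lambda>\<omega>. ?z \<omega> * ?e \<omega>) \<in> borel_measurable (sig (Gset k))"
      using zi_G Fs_G[OF e_meas] by (rule borel_measurable_times)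
  qed
  also have "integral\<^sup>L M (\<lambda>\<omega>. (?z \<omega> * ?e \<omega>) * ?b \<omega>) = integral\<^sup>L M (\<lambda>\<omega>. (?e \<omega> * ?b \<omega>) * ?z \<omega>)"
    by (simp add: mult_ac)
  also have "\<dots> = integral\<^sup>L M (\<lambda>\<omega>. ?e \<omega> * ?b \<omega>) * lam i"
    by (rule E1[OF borel_measurable_times[OF e_meas bb_meas] L2_prod[OF e_L2 bb_L2]])
  finally have eqE: "integral\<^sup>L M (\<lambda>\<omega>. (e (Suc k) \<omega> $ i)\<^sup>2) = integral\<^sup>L M (\<lambda>\<omega>. (?e \<omega>)\<^sup>2)
      + 2 * \<eta> k * 0 - 2 * \<eta> k * (integral\<^sup>L M (\<lambda>\<omega>. ?e \<omega> * ?b \<omega>) * lam i)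
      + (\<eta> k)\<^sup>2 * integral\<^sup>L M (\<lambda>\<omega>. (?z \<omega> * (?r \<omega> - ?b \<omega>))\<^sup>2)" .
  have X3: "integral\<^sup>L M (\<lambda>\<omega>. (?z \<omega> * (?r \<omega> - ?b \<omega>))\<^sup>2) \<le> 2 * (Rb i + KB\<^sup>2 * Q k)"
  proof -
    have "integral\<^sup>L M (\<lambda>\<omega>. (?z \<omega> * (?r \<omega> - ?b \<omega>))\<^sup>2) \<le> integral\<^sup>L M (\<lambda>\<omega>. 2 * (?r \<omega>)\<^sup>2 + 2 * (?b \<omega>)\<^sup>2)"
    proof (rule integral_mono[OF i3])
      show "integrable M (\<lambda>\<omega>. 2 * (?r \<omega>)\<^sup>2 + 2 * (?b \<omega>)\<^sup>2)" using L2_sq[OF rL] L2_sq[OF bb_L2] by simp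
      fix \<omega>
      have "(?z \<omega> * (?r \<omega> - ?b \<omega>))\<^sup>2 = ?z \<omega> * (?r \<omega> - ?b \<omega>)\<^sup>2"
        by (simp add: power_mult_distrib zi_01)
      also have "\<dots> \<le> (?r \<omega> - ?b \<omega>)\<^sup>2" by (rule mult_left_le_one_le) (simp_all add: zi_01)
      also have "\<dots> \<le> 2 * (?r \<omega>)\<^sup>2 + 2 * (?b \<omega>)\<^sup>2"
        using sq_add_le[of "?r \<omega>" "- ?b \<omega>"] by simp
      finally show "(?z \<omega> * (?r \<omega> - ?b \<omega>))\<^sup>2 \<le> 2 * (?r \<omega>)\<^sup>2 + 2 * (?b \<omega>)\<^sup>2" .
    qed
    also have "\<dots> = 2 * integral\<^sup>L M (\<lambda>\<omega>. (?r \<omega>)\<^sup>2) + 2 * integral\<^sup>L M (\<lambda>\<omega>. (?b \<omega>)\<^sup>2)"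
      using L2_sq[OF rL] L2_sq[OF bb_L2] by simp
    also have "\<dots> \<le> 2 * Rb i + 2 * (KB\<^sup>2 * Q k)" using r_sq[of "Suc k" i] Ebb[of k i] by simp
    finally show ?thesis by simp
  qed
  have "(\<eta> k)\<^sup>2 * integral\<^sup>L M (\<lambda>\<omega>. (?z \<omega> * (?r \<omega> - ?b \<omega>))\<^sup>2) \<le> (\<eta> k)\<^sup>2 * (2 * (Rb i + KB\<^sup>2 * Q k))"
    by (rule mult_left_mono[OF X3]) simp
  moreover have "2 * \<eta> k * (integral\<^sup>L M (\<lambda>\<omega>. ?e \<omega> * ?b \<omega>) * lam i) = 2 * \<eta> k * lam i * integral\<^sup>L M (\<lambda>\<omega>. ?e \<omega> * ?b \<omega>)"
    by simp
  moreover have "(\<eta> k)\<^sup>2 * (2 * (Rb i + KB\<^sup>2 * Q k)) = 2 * (\<eta> k)\<^sup>2 * (Rb i + KB\<^sup>2 * Q k)" by simp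
  ultimately show ?thesis using eqE by linarith
qed


definition "c1 = (\<Sum>i\<in>UNIV. 2 * KB\<^sup>2 / lam i)"
definition "c2 = (\<Sum>i\<in>UNIV. 2 * Rb i / lam i)"

lemma c1_pos: "0 < c1"
  unfolding c1_def using KB(1) lam_pos by (intro sum_pos) auto

lemma Rb_nonneg: "0 \<le> Rb i"
  unfolding Rb_def by (intro mult_nonneg_nonneg add_nonneg_nonneg integral_nonneg_AE) auto

lemma c2_nonneg: "0 \<le> c2"
  unfolding c2_def using Rb_nonneg lam_pos by (intro sum_nonneg divide_nonneg_pos) auto

lemma ebb_nonneg: "0 \<le> (\<Sum>i\<in>UNIV. integral\<^sup>L M (\<lambda>\<omega>. e k \<omega> $ i * bb k i \<omega>))"
proof -
  have "(\<Sum>i\<in>UNIV. integral\<^sup>L M (\<lambda>\<omega>. e k \<omega> $ i * bb k i \<omega>)) = integral\<^sup>L M (\<lambda>\<omega>. \<Sum>i\<in>UNIV. e k \<omega> $ i * bb k i \<omega>)"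
    by (rule Bochner_Integration.integral_sum[symmetric]) (rule L2_prod[OF e_L2 bb_L2])
  also have "\<dots> \<ge> 0"
  proof (rule integral_nonneg_AE, rule AE_I2)
    fix \<omega>
    have "(\<Sum>i\<in>UNIV. e k \<omega> $ i * bb k i \<omega>) = e k \<omega> \<bullet> (Bm *v e k \<omega>)"
      by (simp add: inner_vec_real bb_def)
    also have "\<dots> = (norm (transpose A *v e k \<omega>))\<^sup>2" unfolding Bm_def by (rule la_facts(3)[OF full_rank])
    finally show "0 \<le> (\<Sum>i\<in>UNIV. e k \<omega> $ i * bb k i \<omega>)" by simp
  qed
  finally show ?thesis .
qed

lemma Q_step: "Q (Suc k) \<le> Q k + (\<eta> k)\<^sup>2 * (c2 + c1 * Q k)"
proof -
  let ?a = "\<lambda>i. integral\<^sup>L M (\<lambda>\<omega>. (e k \<omega> $ i)\<^sup>2)" and ?c = "\<lambda>i. integral\<^sup>L M (\<lambda>\<omega>. e k \<omega> $ i * bb k i \<omega>)"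
  have "Q (Suc k) = (\<Sum>i\<in>UNIV. integral\<^sup>L M (\<lambda>\<omega>. (e (Suc k) \<omega> $ i)\<^sup>2) / lam i)" by (simp add: Q_def)
  also have "\<dots> \<le> (\<Sum>i\<in>UNIV. (?a i - 2 * \<eta> k * lam i * ?c i + 2 * (\<eta> k)\<^sup>2 * (Rb i + KB\<^sup>2 * Q k)) / lam i)"
    by (rule sum_mono, rule divide_right_mono[OF comp_step]) (use lam_pos less_imp_le in blast)
  also have "\<dots> = (\<Sum>i\<in>UNIV. ?a i / lam i - 2 * \<eta> k * ?c i + (\<eta> k)\<^sup>2 * (2 * Rb i / lam i + 2 * KB\<^sup>2 / lam i * Q k))"
  proof (rule sum.cong[OF refl])
    fix i
    have "lam i \<noteq> 0" using lam_pos[of i] by simp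
    then show "(?a i - 2 * \<eta> k * lam i * ?c i + 2 * (\<eta> k)\<^sup>2 * (Rb i + KB\<^sup>2 * Q k)) / lam i =
      ?a i / lam i - 2 * \<eta> k * ?c i + (\<eta> k)\<^sup>2 * (2 * Rb i / lam i + 2 * KB\<^sup>2 / lam i * Q k)"
      by (simp add: field_simps)
  qed
  also have "\<dots> = Q k - 2 * \<eta> k * (\<Sum>i\<in>UNIV. ?c i) + (\<eta> k)\<^sup>2 * (c2 + c1 * Q k)"
  proof -
    have q: "(\<Sum>i\<in>UNIV. ?a i / lam i) = Q k" by (simp add: Q_def)
    have r2: "(\<Sum>i\<in>UNIV. (\<eta> k)\<^sup>2 * (2 * Rb i / lam i + 2 * KB\<^sup>2 / lam i * Q k)) = (\<eta> k)\<^sup>2 * (c2 + c1 * Q k)"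
    proof -
      have "(\<Sum>i\<in>UNIV. (\<eta> k)\<^sup>2 * (2 * Rb i / lam i + 2 * KB\<^sup>2 / lam i * Q k))
          = (\<Sum>i\<in>UNIV. (\<eta> k)\<^sup>2 * (2 * Rb i / lam i) + ((\<eta> k)\<^sup>2 * Q k) * (2 * KB\<^sup>2 / lam i))"
        by (rule sum.cong) (simp_all add: algebra_simps)
      also have "\<dots> = (\<eta> k)\<^sup>2 * c2 + ((\<eta> k)\<^sup>2 * Q k) * c1"
        unfolding sum.distrib c1_def c2_def sum_distrib_left ..
      also have "\<dots> = (\<eta> k)\<^sup>2 * (c2 + c1 * Q k)" by (simp add: algebra_simps)
      finally show ?thesis .
    qed
    show ?thesis unfolding sum.distrib sum_subtractf q r2 by (simp add: sum_distrib_left)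
  qed
  also have "\<dots> \<le> Q k + (\<eta> k)\<^sup>2 * (c2 + c1 * Q k)"
    using mult_nonneg_nonneg[OF less_imp_le[OF eta_pos[rule_format, of k]] ebb_nonneg[of k]] by simp
  finally show ?thesis .
qed

lemma Q_bound: "Q k \<le> exp (c1 * suminf (\<lambda>j. (\<eta> j)\<^sup>2)) * (Q 0 + c2 / c1)"
proof -
  define c where "c = c2 / c1"
  have cc: "c1 * c = c2" unfolding c_def using c1_pos by simp
  have c0: "0 \<le> c" unfolding c_def using c1_pos c2_nonneg by simp
  have P: "Q k + c \<le> exp (c1 * (\<Sum>j<k. (\<eta> j)\<^sup>2)) * (Q 0 + c)" for k
  proof (induction k)
    case 0 then show ?case by simp
  next
    case (Suc k)
    have e1: "(1 + c1 * (\<eta> k)\<^sup>2) * (Q k + c) = Q k + c + (\<eta> k)\<^sup>2 * (c1 * c + c1 * Q k)"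
      by (simp add: algebra_simps)
    have "Q (Suc k) + c \<le> (1 + c1 * (\<eta> k)\<^sup>2) * (Q k + c)"
      using Q_step[of k] unfolding e1 cc by linarith
    also have "\<dots> \<le> exp (c1 * (\<eta> k)\<^sup>2) * (Q k + c)"
      by (rule mult_right_mono) (use Q_nonneg[of k] c0 exp_ge_add_one_self in auto)
    also have "\<dots> \<le> exp (c1 * (\<eta> k)\<^sup>2) * (exp (c1 * (\<Sum>j<k. (\<eta> j)\<^sup>2)) * (Q 0 + c))"
      by (rule mult_left_mono[OF Suc]) simp
    also have "\<dots> = exp (c1 * (\<Sum>j<Suc k. (\<eta> j)\<^sup>2)) * (Q 0 + c)"
      by (simp add: exp_add[symmetric] algebra_simps)
    finally show ?case .
  qed
  have "(\<Sum>j<k. (\<eta> j)\<^sup>2) \<le> suminf (\<lambda>j. (\<eta> j)\<^sup>2)"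
    by (rule sum_le_suminf[OF eta_sq]) auto
  then have "exp (c1 * (\<Sum>j<k. (\<eta> j)\<^sup>2)) \<le> exp (c1 * suminf (\<lambda>j. (\<eta> j)\<^sup>2))"
    using c1_pos by simp
  then have "exp (c1 * (\<Sum>j<k. (\<eta> j)\<^sup>2)) * (Q 0 + c) \<le> exp (c1 * suminf (\<lambda>j. (\<eta> j)\<^sup>2)) * (Q 0 + c)"
    by (rule mult_right_mono) (use Q_nonneg[of 0] c0 in simp)
  then show ?thesis using P[of k] c0 unfolding c_def by linarith
qed


definition "Qb = exp (c1 * suminf (\<lambda>j. (\<eta> j)\<^sup>2)) * (Q 0 + c2 / c1)"

lemma dd_sq: "integral\<^sup>L M (\<lambda>\<omega>. (dd i n \<omega>)\<^sup>2) \<le> (\<eta> n)\<^sup>2 * (4 * Rb i + 6 * (KB\<^sup>2 * Qb))"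
proof -
  let ?z = "zi (Suc n) i" and ?r = "\<lambda>\<omega>. r (Suc n) \<omega> $ i" and ?b = "bb n i"
  have rL: "L2 ?r" by (rule r_L2) simp
  have "integral\<^sup>L M (\<lambda>\<omega>. (dd i n \<omega>)\<^sup>2) \<le> integral\<^sup>L M (\<lambda>\<omega>. (\<eta> n)\<^sup>2 * (4 * (?r \<omega>)\<^sup>2 + 6 * (?b \<omega>)\<^sup>2))"
  proof (rule integral_mono)
    show "integrable M (\<lambda>\<omega>. (dd i n \<omega>)\<^sup>2)" using L2_sq[OF dd_L2] .
    show "integrable M (\<lambda>\<omega>. (\<eta> n)\<^sup>2 * (4 * (?r \<omega>)\<^sup>2 + 6 * (?b \<omega>)\<^sup>2))"
      using L2_sq[OF rL] L2_sq[OF bb_L2] by simp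
    fix \<omega>
    have a: "(?z \<omega> * (?r \<omega> - ?b \<omega>))\<^sup>2 \<le> 2 * (?r \<omega>)\<^sup>2 + 2 * (?b \<omega>)\<^sup>2"
    proof -
      have "(?z \<omega> * (?r \<omega> - ?b \<omega>))\<^sup>2 = ?z \<omega> * (?r \<omega> - ?b \<omega>)\<^sup>2"
        by (simp add: power_mult_distrib zi_01)
      also have "\<dots> \<le> (?r \<omega> - ?b \<omega>)\<^sup>2" by (rule mult_left_le_one_le) (simp_all add: zi_01)
      also have "\<dots> \<le> 2 * (?r \<omega>)\<^sup>2 + 2 * (?b \<omega>)\<^sup>2"
        using sq_add_le[of "?r \<omega>" "- ?b \<omega>"] by simp
      finally show ?thesis .
    qed
    have b: "(lam i * ?b \<omega>)\<^sup>2 \<le> (?b \<omega>)\<^sup>2"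
    proof -
      have "(lam i)\<^sup>2 \<le> 1" using lam_pos[of i] lam_le1[of i] by (simp add: power_le_one)
      then have "(lam i)\<^sup>2 * (?b \<omega>)\<^sup>2 \<le> 1 * (?b \<omega>)\<^sup>2" by (rule mult_right_mono) simp
      then show ?thesis by (simp add: power_mult_distrib)
    qed
    have "(?z \<omega> * (?r \<omega> - ?b \<omega>) + lam i * ?b \<omega>)\<^sup>2 \<le> 2 * (?z \<omega> * (?r \<omega> - ?b \<omega>))\<^sup>2 + 2 * (lam i * ?b \<omega>)\<^sup>2"
      by (rule sq_add_le)
    also have "\<dots> \<le> 4 * (?r \<omega>)\<^sup>2 + 6 * (?b \<omega>)\<^sup>2" using a b by linarith
    finally have "(?z \<omega> * (?r \<omega> - ?b \<omega>) + lam i * ?b \<omega>)\<^sup>2 \<le> 4 * (?r \<omega>)\<^sup>2 + 6 * (?b \<omega>)\<^sup>2" .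
    then have "(\<eta> n)\<^sup>2 * (?z \<omega> * (?r \<omega> - ?b \<omega>) + lam i * ?b \<omega>)\<^sup>2 \<le> (\<eta> n)\<^sup>2 * (4 * (?r \<omega>)\<^sup>2 + 6 * (?b \<omega>)\<^sup>2)"
      by (rule mult_left_mono) simp
    then show "(dd i n \<omega>)\<^sup>2 \<le> (\<eta> n)\<^sup>2 * (4 * (?r \<omega>)\<^sup>2 + 6 * (?b \<omega>)\<^sup>2)"
      by (simp add: dd_def power_mult_distrib)
  qed
  also have "\<dots> = (\<eta> n)\<^sup>2 * (4 * integral\<^sup>L M (\<lambda>\<omega>. (?r \<omega>)\<^sup>2) + 6 * integral\<^sup>L M (\<lambda>\<omega>. (?b \<omega>)\<^sup>2))"
    using L2_sq[OF rL] L2_sq[OF bb_L2] by simp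
  also have "\<dots> \<le> (\<eta> n)\<^sup>2 * (4 * Rb i + 6 * (KB\<^sup>2 * Qb))"
  proof (rule mult_left_mono)
    have "integral\<^sup>L M (\<lambda>\<omega>. (?b \<omega>)\<^sup>2) \<le> KB\<^sup>2 * Qb"
      using Ebb[of n i] mult_left_mono[OF Q_bound[of n, folded Qb_def], of "KB\<^sup>2"] by simp
    then show "4 * integral\<^sup>L M (\<lambda>\<omega>. (?r \<omega>)\<^sup>2) + 6 * integral\<^sup>L M (\<lambda>\<omega>. (?b \<omega>)\<^sup>2) \<le> 4 * Rb i + 6 * (KB\<^sup>2 * Qb)"
      using r_sq[of "Suc n" i] by simp
  qed simp
  finally show ?thesis .
qed

lemma dd_summ: "summable (\<lambda>n. integral\<^sup>L M (\<lambda>\<omega>. (dd i n \<omega>)\<^sup>2))"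
proof (rule summable_comparison_test[where g="\<lambda>n. (\<eta> n)\<^sup>2 * (4 * Rb i + 6 * (KB\<^sup>2 * Qb))"])
  show "\<exists>N. \<forall>n\<ge>N. norm (integral\<^sup>L M (\<lambda>\<omega>. (dd i n \<omega>)\<^sup>2)) \<le> (\<eta> n)\<^sup>2 * (4 * Rb i + 6 * (KB\<^sup>2 * Qb))"
  proof (intro exI allI impI)
    fix n
    have "0 \<le> integral\<^sup>L M (\<lambda>\<omega>. (dd i n \<omega>)\<^sup>2)" by (rule integral_nonneg_AE) auto
    then show "norm (integral\<^sup>L M (\<lambda>\<omega>. (dd i n \<omega>)\<^sup>2)) \<le> (\<eta> n)\<^sup>2 * (4 * Rb i + 6 * (KB\<^sup>2 * Qb))"
      using dd_sq[of i n] by simp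
  qed
  show "summable (\<lambda>n. (\<eta> n)\<^sup>2 * (4 * Rb i + 6 * (KB\<^sup>2 * Qb)))"
    by (rule summable_mult2[OF eta_sq])
qed

lemma dd_AE: "AE \<omega> in M. convergent (\<lambda>n. \<Sum>j<n. dd i j \<omega>)"
proof -
  interpret mart M Fs "dd i"
  proof
    show "\<And>n. space (Fs n) = space M" by (simp add: Fs_def)
    show "\<And>n. sets (Fs n) \<subseteq> sets M" unfolding Fs_def by (rule sets_sig_M[OF past_sub])
    show "\<And>n. sets (Fs n) \<subseteq> sets (Fs (Suc n))" unfolding Fs_def by (rule sets_sig_mono[OF past_mono past_sub])
    show "\<And>n. dd i n \<in> borel_measurable (Fs (Suc n))" by (rule dd_meas)
    show "\<And>n. L2 (dd i n)" by (rule dd_L2)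
    show "\<And>n g. g \<in> borel_measurable (Fs n) \<Longrightarrow> L2 g \<Longrightarrow> integral\<^sup>L M (\<lambda>x. g x * dd i n x) = 0"
      by (rule orth_dd)
  qed
  show ?thesis by (rule mart_AE_conv[OF dd_summ])
qed

lemma eta_lim: "\<eta> \<longlonglongrightarrow> 0"
proof -
  have "(\<lambda>k. (\<eta> k)\<^sup>2) \<longlonglongrightarrow> 0" by (rule summable_LIMSEQ_zero[OF eta_sq])
  then have "(\<lambda>k. sqrt ((\<eta> k)\<^sup>2)) \<longlonglongrightarrow> sqrt 0" by (rule tendsto_real_sqrt)
  moreover have "sqrt ((\<eta> k)\<^sup>2) = \<eta> k" for k using eta_pos by (simp add: less_imp_le)
  ultimately show ?thesis by simp
qed

lemma main_AE: "AE \<omega> in M. (\<lambda>k. \<alpha> k \<omega>) \<longlonglongrightarrow> astar"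
proof -
  have "AE \<omega> in M. \<forall>i\<in>UNIV. convergent (\<lambda>n. \<Sum>j<n. dd i j \<omega>)"
    by (rule AE_finite_allI) (auto intro: dd_AE)
  then show ?thesis
  proof (rule AE_mp, intro AE_I2 impI)
    fix \<omega> assume cv: "\<forall>i\<in>UNIV. convergent (\<lambda>n. \<Sum>j<n. dd i j \<omega>)"
    define Mv where "Mv n = (\<chi> i. \<Sum>j<n. dd i j \<omega>)" for n
    define L where "L = (\<chi> i. lim (\<lambda>n. \<Sum>j<n. dd i j \<omega>))"
    have MLim: "Mv \<longlonglongrightarrow> L"
      unfolding Mv_def L_def by (rule vec_tendstoI) (use cv convergent_LIMSEQ_iff in auto)
    obtain \<mu> where mu: "0 < \<mu>" "\<And>u. \<mu> * (norm u)\<^sup>2 \<le> u \<bullet> (Bm *v u)"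
      using la_facts(1)[OF full_rank] unfolding Bm_def by blast
    have "(\<lambda>k. e k \<omega>) \<longlonglongrightarrow> 0"
    proof (rule det_conv[OF lam_pos lam_le1 mu eta_pos[rule_format] eta_lim eta_div MLim])
      fix k i
      show "e (Suc k) \<omega> $ i = e k \<omega> $ i - \<eta> k * lam i * (Bm *v e k \<omega>) $ i + (Mv (Suc k) $ i - Mv k $ i)"
        by (simp add: Mv_def e_rec dd_def bb_def algebra_simps)
    qed
    then have "(\<lambda>k. e k \<omega> + astar) \<longlonglongrightarrow> 0 + astar" by (intro tendsto_add tendsto_const)
    then show "(\<lambda>k. \<alpha> k \<omega>) \<longlonglongrightarrow> astar" by (simp add: e_def)
  qed
qed

end

theorem theorem2:
  fixes M :: "'w measure"
    and A :: "real^'n^'m"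
    and X :: "'w \<Rightarrow> real^'n" and W :: "'w \<Rightarrow> real^'m" and Z :: "'w \<Rightarrow> 'm"
    and Xs :: "nat \<Rightarrow> 'w \<Rightarrow> real^'n" and Ws :: "nat \<Rightarrow> 'w \<Rightarrow> real^'m"
    and Zs :: "nat \<Rightarrow> 'w \<Rightarrow> 'm"
    and \<eta> :: "nat \<Rightarrow> real" and x0 :: "real^'n"
    and \<alpha> :: "nat \<Rightarrow> 'w \<Rightarrow> real^'m"
  assumes P: "prob_space M"
    and dim: "CARD('m) < CARD('n)"
    and full_rank: "rank A = CARD('m)"
    and unit_rows: "\<forall>i. norm (A $ i) = 1"
    and X_meas: "X \<in> borel_measurable M"
    and X_sq: "integrable M (\<lambda>\<omega>. (norm (X \<omega>))\<^sup>2)"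
    and W_meas: "W \<in> borel_measurable M"
    and W_int: "integrable M W" and W_mean: "integral\<^sup>L M W = 0"
    and W_sq: "integrable M (\<lambda>\<omega>. (norm (W \<omega>))\<^sup>2)"
    and Z_meas: "Z \<in> measurable M (count_space UNIV)"
    and Z_pos: "\<forall>i. measure M {\<omega> \<in> space M. Z \<omega> = i} > 0"
    and Xs_meas: "\<forall>k\<ge>1. Xs k \<in> borel_measurable M"
    and Ws_meas: "\<forall>k\<ge>1. Ws k \<in> borel_measurable M"
    and Zs_meas: "\<forall>k\<ge>1. Zs k \<in> measurable M (count_space UNIV)"
    and Xs_distr: "\<forall>k\<ge>1. distr M borel (Xs k) = distr M borel X"
    and Ws_distr: "\<forall>k\<ge>1. distr M borel (Ws k) = distr M borel W"
    and Zs_distr: "\<forall>k\<ge>1. distr M (count_space UNIV) (Zs k) = distr M (count_space UNIV) Z"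
    and indep: "prob_space.indep_sets M (kacz_events M Xs Ws Zs)
                  ({IX k | k. k \<ge> 1} \<union> {IW k | k. k \<ge> 1} \<union> {IZ k | k. k \<ge> 1})"
    and eta_pos: "\<forall>k. \<eta> k > 0"
    and eta_div: "\<not> summable \<eta>"
    and eta_sq: "summable (\<lambda>k. (\<eta> k)\<^sup>2)"
    and alpha0: "\<forall>\<omega>. \<alpha> 0 \<omega> = 0"
    and alpha_rec: "\<forall>k \<omega>. \<alpha> (Suc k) \<omega> = \<alpha> k \<omega> + \<eta> k *\<^sub>R
          ((\<chi> i. if i = Zs (Suc k) \<omega>
                  then (A *v Xs (Suc k) \<omega> + Ws (Suc k) \<omega>) $ Zs (Suc k) \<omega> else 0)
           - unit_diag (Zs (Suc k) \<omega>) *v (A *v (x0 + transpose A *v \<alpha> k \<omega>)))"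
  shows "AE \<omega> in M. (\<lambda>k. \<alpha> k \<omega>) \<longlonglongrightarrow>
           matrix_inv (A ** transpose A) *v
             (integral\<^sup>L M (\<lambda>\<omega>. A *v X \<omega> + W \<omega>) - A *v x0)"
proof -
  interpret K: kacz M A X W Z Xs Ws Zs \<eta> x0 \<alpha>
    by (rule kacz.intro[OF P kacz_axioms.intro]; fact)
  show ?thesis using K.main_AE unfolding K.astar_def K.Bm_def K.muY_def .
qed

end
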